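(* Let $L_n$ be the number of leaves of the $2$-$3$-tree (the $B$-tree of order $3$, i.e. $m=1$) obtained by inserting the keys $\pi(1),\dots,\pi(n)$ successively into an empty tree, where $\pi$ is a uniformly random permutation in $S_n$. Then for $n>11$, \[ \mathbb E(L_n)=\tfrac37(n+1),\qquad \mathbb V(L_n)=\tfrac{12}{637}(n+1), \] and \[ \frac{L_n-\mathbb E(L_n)}{\sqrt{\mathbb V(L_n)}}\xrightarrow{d} N(0,1)\quad (n\to\infty). \]
   Context: A $B$-tree of order $2m+1$ is a rooted plane search tree whose nodes contain pairwise distinct keys in increasing left-to-right order (a non-leaf node with $k$ keys has $k+1$ children), every non-root node has between $m$ and $2m$ keys, the root between $1$ and $2m$, and all leaves have equal depth. Insertion: place the new key in the appropriate leaf; whenever a node has $2m+1$ keys, split it, moving the median key up into the parent and forming two nodes from the $m$ smallest and the $m$ largest keys (creating a new one-key root if the root splits). For $m=1$ these are $2$-$3$-trees. *)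

theory Defs
  imports "HOL-Probability.Probability" "HOL-Combinatorics.Multiset_Permutations"
begin

text \<open>B-trees of order 2m+1 with natural-number keys.  A node carries its
  list of keys (increasing) and the list of its children; a leaf is a node
  with no children.\<close>

datatype btree = BNode "nat list" "btree list"

datatype ins_result = Normal btree | Split btree nat btree

text \<open>The recursive call is on the child
  at position i, where i is the number of keys smaller than x (children are
  mapped all at once only to make the recursion structural; only the i-th
  result is used).\<close>

fun ins :: "nat \<Rightarrow> nat \<Rightarrow> btree \<Rightarrow> ins_result" where
  "ins m x (BNode ks ts) =
     (if ts = [] then
        (let ks' = insort x ks in
         if length ks' \<le> 2 * m then Normal (BNode ks' [])
         else Split (BNode (take m ks') []) (ks' ! m) (BNode (drop (m + 1) ks') []))
      else
        (let i = length (filter (\<lambda>k. k < x) ks);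
             rs = map (ins m x) ts in
         case rs ! i of
           Normal t' \<Rightarrow> Normal (BNode ks (ts[i := t']))
         | Split l k r \<Rightarrow>
             (let ks' = take i ks @ k # drop i ks;
                  ts' = take i ts @ l # r # drop (i + 1) ts in
              if length ks' \<le> 2 * m then Normal (BNode ks' ts')
              else Split (BNode (take m ks') (take (m + 1) ts')) (ks' ! m)
                         (BNode (drop (m + 1) ks') (drop (m + 1) ts')))))"

definition binsert :: "nat \<Rightarrow> nat \<Rightarrow> btree \<Rightarrow> btree" where
  "binsert m x t = (case ins m x t of
                      Normal t' \<Rightarrow> t'
                    | Split l k r \<Rightarrow> BNode [k] [l, r])"

definition empty_btree :: btree where
  "empty_btree = BNode [] []"

definition build :: "nat \<Rightarrow> nat list \<Rightarrow> btree" where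
  "build m xs = fold (binsert m) xs empty_btree"

fun leaves :: "btree \<Rightarrow> nat" where
  "leaves (BNode ks ts) = (if ts = [] then 1 else sum_list (map leaves ts))"

definition L_dist :: "nat \<Rightarrow> real pmf" where
  "L_dist n = map_pmf (\<lambda>xs. real (leaves (build 1 xs)))
                (pmf_of_set (permutations_of_set {1..n}))"

end

theory Submission
  imports Defs "HOL-Probability.Random_Permutations" "HOL-Real_Asymp.Real_Asymp"
begin


fun merge_io :: "nat list list \<Rightarrow> nat list \<Rightarrow> nat list" where
  "merge_io (a#as) (k#ks) = a @ k # merge_io as ks"
| "merge_io as [] = concat as"
| "merge_io [] ks = []"

fun inorder :: "btree \<Rightarrow> nat list" where
  "inorder (BNode ks ts) = (if ts = [] then ks else merge_io (map inorder ts) ks)"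

fun leafsizes :: "btree \<Rightarrow> nat list" where
  "leafsizes (BNode ks ts) = (if ts = [] then [length ks] else concat (map leafsizes ts))"

fun wf :: "btree \<Rightarrow> bool" where
  "wf (BNode ks ts) = (ts = [] \<or> (length ts = Suc (length ks) \<and> (\<forall>t\<in>set ts. wf t)))"

definition gaps :: "nat list \<Rightarrow> nat list" where
  "gaps ls = concat (map (\<lambda>s. replicate (Suc s) s) ls)"

fun upd :: "nat \<Rightarrow> nat list \<Rightarrow> nat \<Rightarrow> nat list" where
  "upd m [] r = []"
| "upd m (s # ls) r = (if r \<le> s then (if s < 2 * m then Suc s # ls else m # (s - m) # ls)
                        else s # upd m ls (r - Suc s))"

definition rank :: "nat \<Rightarrow> nat list \<Rightarrow> nat" where
  "rank x xs = length (filter (\<lambda>y. y < x) xs)"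

lemma leaves_leafsizes: "leaves T = length (leafsizes T)"
proof (induction T)
  case (BNode ks ts)
  then show ?case by (auto simp: length_concat o_def intro!: arg_cong[where f=sum_list] map_cong)
qed

lemma gaps_append[simp]: "gaps (A @ B) = gaps A @ gaps B" by (simp add: gaps_def)
lemma gaps_Cons: "gaps (s # A) = replicate (Suc s) s @ gaps A" by (simp add: gaps_def)
lemma length_gaps_concat: "length (gaps (concat xs)) = sum_list (map (\<lambda>l. length (gaps l)) xs)"
  by (induction xs) (auto simp: gaps_def)

lemma length_merge_io: "length As = Suc (length ks) \<Longrightarrow>
  length (merge_io As ks) = sum_list (map length As) + length ks"
  by (induction As ks rule: merge_io.induct) (auto simp: length_concat)

lemma length_gaps_leafsizes: "wf T \<Longrightarrow> length (gaps (leafsizes T)) = Suc (length (inorder T))"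
proof (induction T)
  case (BNode ks ts)
  show ?case
  proof (cases "ts = []")
    case True then show ?thesis by (simp add: gaps_def)
  next
    case False
    with BNode.prems have l: "length ts = Suc (length ks)" and w: "\<forall>t\<in>set ts. wf t" by auto
    have "length (gaps (leafsizes (BNode ks ts))) = sum_list (map (\<lambda>t. Suc (length (inorder t))) ts)"
      using False w BNode.IH by (simp add: length_gaps_concat o_def cong: map_cong)
    also have "\<dots> = sum_list (map (\<lambda>t. length (inorder t)) ts) + length ts"
      by (induction ts) auto
    finally show ?thesis using False l by (simp add: length_merge_io o_def)
  qed
qed

lemma upd_append1: "r < length (gaps A) \<Longrightarrow> upd m (A @ B) r = upd m A r @ B"
  by (induction m A r rule: upd.induct) (auto simp: gaps_def)

lemma upd_append2: "upd m (A @ B) (length (gaps A) + r) = A @ upd m B r"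
  by (induction A) (auto simp: gaps_def)

definition Pf :: "nat list list \<Rightarrow> nat list \<Rightarrow> nat list" where
  "Pf As K = concat (map2 (\<lambda>a k. a @ [k]) As K)"

definition Rf :: "nat list list \<Rightarrow> nat list \<Rightarrow> nat list" where
  "Rf Bs K = (case K of [] \<Rightarrow> [] | k # K' \<Rightarrow> k # merge_io Bs K')"

lemma merge_io_app: "length As = length K1 \<Longrightarrow> merge_io (As @ Bs) (K1 @ K2) = Pf As K1 @ merge_io Bs K2"
  by (induction As K1 rule: list_induct2) (auto simp: Pf_def)

lemma merge_io_decomp: "length A = length K1 \<Longrightarrow> length B = length K2 \<Longrightarrow>
  merge_io (A @ a # B) (K1 @ K2) = Pf A K1 @ a @ Rf B K2"
  using merge_io_app[of A K1 "[a]" "[]"] by (cases K2; cases B) (auto simp: merge_io_app Rf_def)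

lemma Pf_snoc: "length A = length K \<Longrightarrow> Pf (A @ [a]) (K @ [k]) = Pf A K @ a @ [k]"
  by (simp add: Pf_def)

lemma length_Pf: "length A = length K \<Longrightarrow> length (Pf A K) = sum_list (map length A) + length K"
  by (induction A K rule: list_induct2) (auto simp: Pf_def)

lemma merge_io_split: "length Ts = Suc (length Ks) \<Longrightarrow> j < length Ks \<Longrightarrow>
  merge_io Ts Ks = merge_io (take (Suc j) Ts) (take j Ks) @ Ks!j # merge_io (drop (Suc j) Ts) (drop (Suc j) Ks)"
proof (induction j arbitrary: Ts Ks)
  case 0
  then obtain a Ts' k Ks' where "Ts = a # Ts'" "Ks = k # Ks'" by (cases Ts; cases Ks) auto
  then show ?case by simp
next
  case (Suc j)
  then obtain a Ts' k Ks' where "Ts = a # Ts'" "Ks = k # Ks'" by (cases Ts; cases Ks) auto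
  with Suc show ?case by simp
qed

lemma insort_append_left: "\<forall>y\<in>set P. y < x \<Longrightarrow> insort x (P @ Q) = P @ insort x Q"
  by (induction P) auto

lemma insort_append_right: "\<forall>y\<in>set S. x < y \<Longrightarrow> insort x (I @ S) = insort x I @ S"
proof (induction I)
  case Nil then show ?case by (cases S) auto
qed auto

lemma set_merge_io_ks: "length As \<ge> length ks \<Longrightarrow> set ks \<subseteq> set (merge_io As ks)"
  by (induction As ks rule: merge_io.induct) auto

lemma sorted_merge_io_ks: "length As \<ge> length ks \<Longrightarrow> sorted_wrt (<) (merge_io As ks) \<Longrightarrow> sorted_wrt (<) ks"
proof (induction As ks rule: merge_io.induct)
  case (1 a as k ks)
  then show ?case using set_merge_io_ks[of ks as] by (auto simp: sorted_wrt_append)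
qed auto


lemma rank_char: "sorted_wrt (<) (ks::nat list) \<Longrightarrow> x \<notin> set ks \<Longrightarrow> j < length ks \<Longrightarrow>
   (ks!j < x \<longleftrightarrow> j < length (filter (\<lambda>k. k < x) ks))"
proof (induction ks arbitrary: j)
  case (Cons k ks)
  show ?case
  proof (cases "k < x")
    case True
    then show ?thesis using Cons by (cases j) auto
  next
    case False
    then have "x < k" using Cons.prems(2) by auto
    then have "filter (\<lambda>k. k < x) ks = []" using Cons.prems(1) by (auto simp: filter_empty_conv)
    moreover have "ks!j' > x" if "j = Suc j'" for j'
    proof -
      have "ks!j' \<in> set ks" using Cons.prems(3) that by simp
      then show ?thesis using Cons.prems(1) \<open>x<k\<close> by auto
    qed
    ultimately show ?thesis using False \<open>x<k\<close> by (cases j) auto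
  qed
qed simp

lemma node_split:
  assumes l: "length ts = Suc (length ks)" and m: "m < length ks" and w: "\<forall>t\<in>set ts. wf t"
  shows "wf (BNode (take m ks) (take (Suc m) ts)) \<and> wf (BNode (drop (Suc m) ks) (drop (Suc m) ts)) \<and>
    inorder (BNode (take m ks) (take (Suc m) ts)) @ ks!m # inorder (BNode (drop (Suc m) ks) (drop (Suc m) ts))
      = merge_io (map inorder ts) ks \<and>
    leafsizes (BNode (take m ks) (take (Suc m) ts)) @ leafsizes (BNode (drop (Suc m) ks) (drop (Suc m) ts))
      = concat (map leafsizes ts)"
proof -
  have ne1: "take (Suc m) ts \<noteq> []" using l by (cases ts) auto
  have ne2: "drop (Suc m) ts \<noteq> []" using l m by simp
  have w1: "\<forall>t\<in>set (take (Suc m) ts). wf t" using w by (meson in_set_takeD)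
  have w2: "\<forall>t\<in>set (drop (Suc m) ts). wf t" using w by (meson in_set_dropD)
  have "merge_io (map inorder ts) ks = merge_io (take (Suc m) (map inorder ts)) (take m ks) @ ks!m #
      merge_io (drop (Suc m) (map inorder ts)) (drop (Suc m) ks)"
    using merge_io_split[of "map inorder ts" ks m] l m by simp
  moreover have "concat (map leafsizes ts) = concat (map leafsizes (take (Suc m) ts)) @ concat (map leafsizes (drop (Suc m) ts))"
    by (metis append_take_drop_id concat_append map_append)
  ultimately show ?thesis using ne1 ne2 w1 w2 l m by (simp add: take_map drop_map min_def)
qed

lemma ins_correct:
  "wf T \<Longrightarrow> sorted_wrt (<) (inorder T) \<Longrightarrow> x \<notin> set (inorder T) \<Longrightarrow>
   (case ins m x T of
      Normal t' \<Rightarrow> wf t' \<and> inorder t' = insort x (inorder T) \<and> leafsizes t' = upd m (leafsizes T) (rank x (inorder T))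
    | Split l k r \<Rightarrow> wf l \<and> wf r \<and> inorder l @ k # inorder r = insort x (inorder T) \<and>
                    leafsizes l @ leafsizes r = upd m (leafsizes T) (rank x (inorder T)))"
proof (induction T)
  case (BNode ks ts)
  show ?case
  proof (cases "ts = []")
    case True
    let ?ks' = "insort x ks"
    have rk: "rank x ks \<le> length ks" by (simp add: rank_def)
    show ?thesis
    proof (cases "length ?ks' \<le> 2*m")
      case True2: True
      then show ?thesis using True rk by (simp add: Let_def)
    next
      case False
      have mlt: "m < length ?ks'" using False by simp
      have "take m ?ks' @ ?ks' ! m # drop (Suc m) ?ks' = ?ks'" using mlt by (simp add: id_take_nth_drop[symmetric])
      then show ?thesis using True False rk mlt by (simp add: Let_def min_def)
    qed
  next
    case False
    note ne = False
    have l: "length ts = Suc (length ks)" and w: "\<forall>t\<in>set ts. wf t" using BNode.prems(1) ne by auto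
    define i where "i = length (filter (\<lambda>k. k < x) ks)"
    have io: "inorder (BNode ks ts) = merge_io (map inorder ts) ks" using ne by simp
    have sks: "sorted_wrt (<) ks" using sorted_merge_io_ks[of ks "map inorder ts"] BNode.prems(2) io l by simp
    have xks: "x \<notin> set ks" using set_merge_io_ks[of ks "map inorder ts"] BNode.prems(3) io l by auto
    have ile: "i \<le> length ks" by (simp add: i_def)
    have ilt: "i < length ts" using ile l by simp
    have kb: "\<And>j. j < length ks \<Longrightarrow> (ks!j < x \<longleftrightarrow> j < i)" using rank_char[OF sks xks] i_def by blast
    define A where "A = take i ts"
    define B where "B = drop (Suc i) ts"
    define t where "t = ts!i"
    define K1 where "K1 = take i ks"
    define K2 where "K2 = drop i ks"
    have tsd: "ts = A @ t # B" unfolding A_def B_def t_def using ilt by (simp add: id_take_nth_drop)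
    have ksd: "ks = K1 @ K2" by (simp add: K1_def K2_def)
    have lA: "length (map inorder A) = length K1" using ile ilt by (simp add: A_def K1_def)
    have lB: "length (map inorder B) = length K2" using l by (simp add: B_def K2_def)
    define P where "P = Pf (map inorder A) K1"
    define S where "S = Rf (map inorder B) K2"
    have iod: "inorder (BNode ks ts) = P @ inorder t @ S"
      using io merge_io_decomp[OF lA lB, of "inorder t"] tsd ksd by (simp add: P_def S_def)
    have srt: "sorted_wrt (<) (P @ inorder t @ S)" using iod BNode.prems(2) by simp
    have Pless: "\<forall>y\<in>set P. y < x"
    proof (cases i)
      case 0 then show ?thesis by (simp add: P_def A_def K1_def Pf_def)
    next
      case (Suc i')
      have A': "A = take i' ts @ [ts!i']" using Suc ilt by (simp add: A_def take_Suc_conv_app_nth)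
      have K': "K1 = take i' ks @ [ks!i']" using Suc ile by (simp add: K1_def take_Suc_conv_app_nth)
      have P': "P = Pf (map inorder (take i' ts)) (take i' ks) @ inorder (ts!i') @ [ks!i']"
        using A' K' Pf_snoc[of "map inorder (take i' ts)" "take i' ks"] Suc ile ilt by (simp add: P_def)
      have "sorted_wrt (<) P" using srt by (simp add: sorted_wrt_append)
      then have "\<forall>y\<in>set P. y \<le> ks!i'" using P' by (auto simp: sorted_wrt_append)
      moreover have "ks!i' < x" using kb[of i'] Suc ile by simp
      ultimately show ?thesis by fastforce
    qed
    have Sgr: "\<forall>y\<in>set S. x < y"
    proof (cases "i < length ks")
      case False
      then have "K2 = []" using ile by (simp add: K2_def)
      then show ?thesis by (simp add: S_def Rf_def)
    next
      case True
      have K2': "K2 = ks!i # drop (Suc i) ks" using True by (simp add: K2_def Cons_nth_drop_Suc)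
      have "sorted_wrt (<) S" using srt by (simp add: sorted_wrt_append)
      then have "\<forall>y\<in>set S. ks!i \<le> y" using K2' by (auto simp: S_def Rf_def)
      moreover have "x < ks!i"
      proof -
        have "ks!i \<noteq> x" using xks nth_mem[OF True] by auto
        then show ?thesis using kb[of i] True by auto
      qed
      ultimately show ?thesis by fastforce
    qed
    have tin: "t \<in> set ts" using tsd by simp
    have wt: "wf t" using w tin by simp
    have st: "sorted_wrt (<) (inorder t)" using srt by (simp add: sorted_wrt_append)
    have xt: "x \<notin> set (inorder t)" using BNode.prems(3) iod by simp
    have IH: "case ins m x t of
      Normal t' \<Rightarrow> wf t' \<and> inorder t' = insort x (inorder t) \<and> leafsizes t' = upd m (leafsizes t) (rank x (inorder t))
    | Split l k r \<Rightarrow> wf l \<and> wf r \<and> inorder l @ k # inorder r = insort x (inorder t) \<and>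
                    leafsizes l @ leafsizes r = upd m (leafsizes t) (rank x (inorder t))"
      using BNode.IH[OF tin wt st xt] .
    have ins_ins: "insort x (inorder (BNode ks ts)) = P @ insort x (inorder t) @ S"
      using iod Pless Sgr by (simp add: insort_append_left insort_append_right)
    have rk: "rank x (inorder (BNode ks ts)) = length P + rank x (inorder t)"
    proof -
      have "filter (\<lambda>y. y < x) P = P" using Pless by simp
      moreover have "filter (\<lambda>y. y < x) S = []" using Sgr by (auto simp: filter_empty_conv)
      ultimately show ?thesis using iod by (simp add: rank_def)
    qed
    define LA where "LA = concat (map leafsizes A)"
    define LB where "LB = concat (map leafsizes B)"
    have lsT: "leafsizes (BNode ks ts) = LA @ leafsizes t @ LB" using ne tsd by (simp add: LA_def LB_def)
    have lgA: "length (gaps LA) = length P"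
    proof -
      have wA: "\<forall>a\<in>set A. wf a" using w tsd by simp
      have "length (gaps LA) = sum_list (map (\<lambda>a. Suc (length (inorder a))) A)"
        unfolding LA_def length_gaps_concat map_map o_def using wA length_gaps_leafsizes
        by (metis (no_types, lifting) map_cong)
      also have "\<dots> = sum_list (map (\<lambda>a. length (inorder a)) A) + length A" by (induction A) auto
      finally show ?thesis using lA by (simp add: P_def length_Pf o_def)
    qed
    have rlt: "rank x (inorder t) < length (gaps (leafsizes t))"
      using length_gaps_leafsizes[OF wt] by (simp add: rank_def less_Suc_eq_le)
    have updT: "upd m (leafsizes (BNode ks ts)) (rank x (inorder (BNode ks ts))) =
        LA @ upd m (leafsizes t) (rank x (inorder t)) @ LB"
      using lsT rk lgA upd_append2[of m LA] upd_append1[OF rlt] by simp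
    have insT: "ins m x (BNode ks ts) = (case ins m x t of
        Normal t' \<Rightarrow> Normal (BNode ks (ts[i := t']))
      | Split l k r \<Rightarrow>
          (if length (take i ks @ k # drop i ks) \<le> 2 * m
           then Normal (BNode (take i ks @ k # drop i ks) (take i ts @ l # r # drop (i + 1) ts))
           else Split (BNode (take m (take i ks @ k # drop i ks)) (take (m + 1) (take i ts @ l # r # drop (i + 1) ts)))
                 ((take i ks @ k # drop i ks) ! m)
                 (BNode (drop (m + 1) (take i ks @ k # drop i ks)) (drop (m + 1) (take i ts @ l # r # drop (i + 1) ts)))))"
      using ne ilt by (simp add: Let_def i_def[symmetric] t_def split: ins_result.split)
    show ?thesis
    proof (cases "ins m x t")
      case (Normal t')
      have tsu: "ts[i := t'] = A @ t' # B" using ilt by (simp add: A_def B_def upd_conv_take_nth_drop)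
      have "inorder (BNode ks (ts[i := t'])) = P @ inorder t' @ S"
        using tsu ksd merge_io_decomp[OF lA lB, of "inorder t'"] by (simp add: P_def S_def)
      moreover have "leafsizes (BNode ks (ts[i := t'])) = LA @ leafsizes t' @ LB"
        using tsu by (simp add: LA_def LB_def)
      moreover have "wf (BNode ks (ts[i := t']))" using tsu tsd l w IH Normal by auto
      ultimately show ?thesis using insT Normal IH ins_ins updT by simp
    next
      case (Split lt k rt)
      define ks' where "ks' = take i ks @ k # drop i ks"
      define ts' where "ts' = take i ts @ lt # rt # drop (i + 1) ts"
      have ks'd: "ks' = (K1 @ [k]) @ K2" by (simp add: ks'_def K1_def K2_def)
      have ts'd: "ts' = (A @ [lt]) @ rt # B" by (simp add: ts'_def A_def B_def)
      have lA': "length (map inorder (A @ [lt])) = length (K1 @ [k])" using lA by simp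
      have io': "merge_io (map inorder ts') ks' = P @ inorder lt @ k # inorder rt @ S"
        using merge_io_decomp[OF lA' lB, of "inorder rt"] ks'd ts'd Pf_snoc[OF lA]
        by (simp add: P_def S_def)
      have ls': "concat (map leafsizes ts') = LA @ leafsizes lt @ leafsizes rt @ LB"
        using ts'd by (simp add: LA_def LB_def)
      have l': "length ts' = Suc (length ks')" using l ilt ile by (simp add: ts'_def ks'_def)
      have w': "\<forall>t\<in>set ts'. wf t" using ts'd tsd w IH Split by auto
      have ne': "ts' \<noteq> []" by (simp add: ts'_def)
      have res: "inorder lt @ k # inorder rt = insort x (inorder t) \<and>
                    leafsizes lt @ leafsizes rt = upd m (leafsizes t) (rank x (inorder t))"
        using IH Split by simp
      have ioN: "inorder (BNode ks' ts') = merge_io (map inorder ts') ks'" using ne' by simp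
      have lsN: "leafsizes (BNode ks' ts') = concat (map leafsizes ts')" using ne' by simp
      have wN: "wf (BNode ks' ts')" using l' w' by simp
      show ?thesis
      proof (cases "length ks' \<le> 2 * m")
        case True
        have "ins m x (BNode ks ts) = Normal (BNode ks' ts')" using insT Split True
          by (simp add: ks'_def ts'_def)
        then show ?thesis using ioN lsN wN io' ls' res ins_ins updT
          by (simp del: ins.simps inorder.simps leafsizes.simps wf.simps)
      next
        case False
        have mk: "m < length ks'" using False by simp
        note ns = node_split[OF l' mk w']
        have "ins m x (BNode ks ts) = Split (BNode (take m ks') (take (Suc m) ts')) (ks' ! m)
             (BNode (drop (Suc m) ks') (drop (Suc m) ts'))" using insT Split False
          by (simp add: ks'_def ts'_def)
        then show ?thesis using ns io' ls' res ins_ins updT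
          by (simp del: ins.simps inorder.simps leafsizes.simps wf.simps)
      qed
    qed
  qed
qed

lemma binsert_correct:
  assumes "wf T" "sorted_wrt (<) (inorder T)" "x \<notin> set (inorder T)"
  shows "wf (binsert m x T) \<and> inorder (binsert m x T) = insort x (inorder T) \<and>
         leafsizes (binsert m x T) = upd m (leafsizes T) (rank x (inorder T))"
  using ins_correct[OF assms, of m] by (auto simp: binsert_def split: ins_result.splits)


lemma build_snoc: "build m (ys @ [x]) = binsert m x (build m ys)"
  by (simp add: build_def)

lemma build_inv: "distinct ys \<Longrightarrow> wf (build m ys) \<and> sorted_wrt (<) (inorder (build m ys)) \<and>
   set (inorder (build m ys)) = set ys"
proof (induction ys rule: rev_induct)
  case Nil then show ?case by (simp add: build_def empty_btree_def)
next
  case (snoc x ys)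
  then have IH: "wf (build m ys)" "sorted_wrt (<) (inorder (build m ys))" "set (inorder (build m ys)) = set ys"
    and xn: "x \<notin> set ys" by auto
  have xn': "x \<notin> set (inorder (build m ys))" using IH xn by simp
  note bc = binsert_correct[OF IH(1,2) xn', of m]
  have "sorted_wrt (<) (insort x (inorder (build m ys)))"
    using IH(2) xn' by (simp add: strict_sorted_iff sorted_insort distinct_insort)
  then show ?case using bc IH by (simp add: build_snoc set_insort_key)
qed

lemma build_snoc_ls:
  assumes "distinct (ys @ [x])"
  shows "leafsizes (build m (ys @ [x])) = upd m (leafsizes (build m ys)) (card {y\<in>set ys. y < x})"
proof -
  have d: "distinct ys" and xn: "x \<notin> set ys" using assms by auto
  note I = build_inv[OF d, of m]
  have xn': "x \<notin> set (inorder (build m ys))" using I xn by simp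
  have dd: "distinct (inorder (build m ys))" using I by (simp add: strict_sorted_iff)
  have "rank x (inorder (build m ys)) = card {y\<in>set ys. y < x}"
  proof -
    have "{y\<in>set ys. y < x} = {xa. xa < x} \<inter> set (inorder (build m ys))" using I by auto
    then show ?thesis unfolding rank_def using dd by (simp add: distinct_length_filter)
  qed
  then show ?thesis using binsert_correct[OF _ _ xn', of m] I by (simp add: build_snoc)
qed

definition G :: "nat \<Rightarrow> nat list pmf" where
  "G n = rec_nat (return_pmf [0]) (\<lambda>n g. g \<bind> (\<lambda>ls. map_pmf (upd 1 ls) (pmf_of_set {0..n}))) n"

lemma G_0: "G 0 = return_pmf [0]" by (simp add: G_def)
lemma G_Suc: "G (Suc n) = G n \<bind> (\<lambda>ls. map_pmf (upd 1 ls) (pmf_of_set {0..n}))" by (simp add: G_def)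

lemma map_pmf_perm_rev: "map_pmf f (pmf_of_set (permutations_of_set B)) =
   map_pmf (f \<circ> rev) (pmf_of_set (permutations_of_set B))" if "finite B"
proof -
  have "pmf_of_set (permutations_of_set B) = map_pmf rev (pmf_of_set (permutations_of_set B))"
    using that by (subst map_pmf_of_set_inj) (auto simp: inj_on_def)
  then show ?thesis by (metis pmf.map_comp)
qed

lemma rank_bij:
  fixes B :: "nat set"
  assumes "finite B"
  shows "inj_on (\<lambda>x. card {y\<in>B. y < x}) B" "(\<lambda>x. card {y\<in>B. y < x}) ` B = {0..<card B}"
proof -
  let ?rk = "\<lambda>x. card {y\<in>B. y < x}"
  have mono: "?rk x < ?rk z" if "x \<in> B" "z \<in> B" "x < z" for x z
  proof -
    have "{y\<in>B. y < x} \<subset> {y\<in>B. y < z}" using that by auto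
    then show ?thesis using assms by (intro psubset_card_mono) auto
  qed
  show inj: "inj_on ?rk B"
    by (metis (no_types, lifting) inj_onI linorder_neqE_nat mono order_less_irrefl)
  have sub: "?rk ` B \<subseteq> {0..<card B}"
  proof
    fix r assume "r \<in> ?rk ` B"
    then obtain x where x: "x \<in> B" "r = ?rk x" by auto
    have "{y\<in>B. y < x} \<subset> B" using x by auto
    then show "r \<in> {0..<card B}" using x assms by (simp add: psubset_card_mono)
  qed
  have "card (?rk ` B) = card B" using inj by (simp add: card_image)
  then show "?rk ` B = {0..<card B}" using sub by (intro card_subset_eq) auto
qed

lemma perm_dist: "finite B \<Longrightarrow>
  map_pmf (\<lambda>xs. leafsizes (build 1 xs)) (pmf_of_set (permutations_of_set B)) = G (card B)"
proof (induction "card B" arbitrary: B)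
  case 0
  then have "B = {}" by simp
  then show ?case by (simp add: G_0 pmf_of_set_singleton build_def empty_btree_def)
next
  case (Suc n)
  let ?F = "\<lambda>xs. leafsizes (build 1 xs)"
  let ?rk = "\<lambda>x. card {y\<in>B. y < x}"
  have fin: "finite B" and ne: "B \<noteq> {}" using Suc by auto
  have IH: "map_pmf (?F \<circ> rev) (pmf_of_set (permutations_of_set (B - {x}))) = G n" if "x \<in> B" for x
  proof -
    have "card (B - {x}) = n" using Suc that fin by simp
    then show ?thesis using Suc.hyps(1)[of "B - {x}"] fin map_pmf_perm_rev[of "B - {x}" ?F] by simp
  qed
  have step: "?F (rev ys @ [x]) = upd 1 (?F (rev ys)) (?rk x)"
    if "x \<in> B" "ys \<in> permutations_of_set (B - {x})" for x ys
  proof -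
    have "set ys = B - {x}" "distinct ys" using that by (auto dest: permutations_of_setD)
    moreover have "{y \<in> set (rev ys). y < x} = {y\<in>B. y < x}" using calculation by auto
    ultimately show ?thesis using build_snoc_ls[of "rev ys" x 1] by simp
  qed
  have "map_pmf ?F (pmf_of_set (permutations_of_set B)) = map_pmf (?F \<circ> rev) (pmf_of_set (permutations_of_set B))"
    using map_pmf_perm_rev[OF fin] .
  also have "\<dots> = pmf_of_set B \<bind> (\<lambda>x. map_pmf (\<lambda>ys. ?F (rev (x # ys))) (pmf_of_set (permutations_of_set (B - {x}))))"
    using fin ne by (simp add: random_permutation_of_set map_bind_pmf map_pmf_def[symmetric] pmf.map_comp o_def)
  also have "\<dots> = pmf_of_set B \<bind> (\<lambda>x. map_pmf (\<lambda>ls. upd 1 ls (?rk x)) (G n))"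
  proof (intro bind_pmf_cong refl)
    fix x assume x: "x \<in> set_pmf (pmf_of_set B)"
    then have xB: "x \<in> B" using fin ne by simp
    have "map_pmf (\<lambda>ys. ?F (rev (x # ys))) (pmf_of_set (permutations_of_set (B - {x}))) =
          map_pmf (\<lambda>ys. upd 1 (?F (rev ys)) (?rk x)) (pmf_of_set (permutations_of_set (B - {x})))"
      using fin step[OF xB] by (intro map_pmf_cong refl) auto
    also have "\<dots> = map_pmf (\<lambda>ls. upd 1 ls (?rk x)) (map_pmf (?F \<circ> rev) (pmf_of_set (permutations_of_set (B - {x}))))"
      by (simp add: pmf.map_comp o_def)
    finally show "map_pmf (\<lambda>ys. ?F (rev (x # ys))) (pmf_of_set (permutations_of_set (B - {x}))) =
          map_pmf (\<lambda>ls. upd 1 ls (?rk x)) (G n)" using IH[OF xB] by simp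
  qed
  also have "\<dots> = G n \<bind> (\<lambda>ls. map_pmf (\<lambda>x. upd 1 ls (?rk x)) (pmf_of_set B))"
    unfolding map_pmf_def by (subst bind_commute_pmf) simp
  also have "\<dots> = G n \<bind> (\<lambda>ls. map_pmf (upd 1 ls) (pmf_of_set {0..n}))"
  proof (intro bind_pmf_cong refl)
    fix ls
    have "map_pmf (\<lambda>x. upd 1 ls (?rk x)) (pmf_of_set B) = map_pmf (upd 1 ls) (map_pmf ?rk (pmf_of_set B))"
      by (simp add: pmf.map_comp o_def)
    also have "map_pmf ?rk (pmf_of_set B) = pmf_of_set {0..<card B}"
      using rank_bij[OF fin] fin ne by (simp add: map_pmf_of_set_inj)
    finally show "map_pmf (\<lambda>x. upd 1 ls (?rk x)) (pmf_of_set B) = map_pmf (upd 1 ls) (pmf_of_set {0..n})"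
      using Suc.hyps(2)[symmetric] by (simp add: atLeastLessThanSuc_atLeastAtMost)
  qed
  also have "\<dots> = G (card B)" using Suc.hyps(2)[symmetric] by (simp add: G_Suc)
  finally show ?case .
qed


definition qf :: "nat \<Rightarrow> nat \<Rightarrow> real" where
  "qf n L = 3 * real (n + 1 - 2 * L) / real (n + 1)"

definition step :: "nat \<Rightarrow> nat \<Rightarrow> nat pmf" where
  "step n L = map_pmf (\<lambda>b. if b then Suc L else L) (bernoulli_pmf (qf n L))"

definition Lc :: "nat \<Rightarrow> nat pmf" where
  "Lc n = rec_nat (return_pmf 1) (\<lambda>n p. p \<bind> step n) n"

lemma Lc_0: "Lc 0 = return_pmf 1" by (simp add: Lc_def)
lemma Lc_Suc: "Lc (Suc n) = Lc n \<bind> step n" by (simp add: Lc_def)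

lemma length_gaps: "length (gaps ls) = sum_list (map Suc ls)"
  by (induction ls) (auto simp: gaps_def)

lemma gaps_Nil[simp]: "gaps [] = []" by (simp add: gaps_def)
lemma length_gaps_Cons[simp]: "length (gaps (s # ls)) = Suc s + length (gaps ls)" by (simp add: gaps_def)

lemma gaps_nth_Cons: "gaps (s # ls) ! r = (if r \<le> s then s else gaps ls ! (r - Suc s))"
  by (auto simp: gaps_Cons nth_append simp del: replicate_Suc)

lemma length_upd: "r < length (gaps ls) \<Longrightarrow>
   length (upd m ls r) = length ls + (if 2 * m \<le> gaps ls ! r then 1 else 0)"
  by (induction m ls r rule: upd.induct) (auto simp: gaps_nth_Cons)

lemma sum_upd: "r < length (gaps ls) \<Longrightarrow> sum_list (map Suc (upd m ls r)) = Suc (sum_list (map Suc ls))"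
  by (induction m ls r rule: upd.induct) auto

lemma sizes_upd: "\<forall>s\<in>set ls. s = 1 \<or> s = 2 \<Longrightarrow> \<forall>s\<in>set (upd 1 ls r). s = 1 \<or> s = 2"
  by (induction "1::nat" ls r rule: upd.induct) auto

lemma G_inv: "ls \<in> set_pmf (G n) \<Longrightarrow> sum_list (map Suc ls) = Suc n \<and> (n = 0 \<longrightarrow> ls = [0]) \<and>
   (0 < n \<longrightarrow> (\<forall>s\<in>set ls. s = 1 \<or> s = 2))"
proof (induction n arbitrary: ls)
  case 0 then show ?case by (simp add: G_0)
next
  case (Suc n)
  then obtain ls0 r where ls0: "ls0 \<in> set_pmf (G n)" and r: "r \<le> n" and ls: "ls = upd 1 ls0 r"
    by (auto simp: G_Suc)
  note I = Suc.IH[OF ls0]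
  have rl: "r < length (gaps ls0)" using I r by (simp add: length_gaps)
  have s: "sum_list (map Suc ls) = Suc (Suc n)" using sum_upd[OF rl] I ls by simp
  have "\<forall>s\<in>set ls. s = 1 \<or> s = 2"
  proof (cases n)
    case 0 then show ?thesis using I r ls by simp
  next
    case (Suc n') then show ?thesis using I ls sizes_upd by auto
  qed
  then show ?case using s by simp
qed

lemma count_big: "\<forall>s\<in>set ls. s = 1 \<or> s = 2 \<Longrightarrow>
  length (filter (\<lambda>s. 2 \<le> s) (gaps ls)) + 6 * length ls = 3 * sum_list (map Suc ls)"
  by (induction ls) (auto simp: gaps_Cons)

lemma count_split: "ls \<in> set_pmf (G n) \<Longrightarrow>
  card {r\<in>{0..n}. 2 \<le> gaps ls ! r} = 3 * (Suc n - 2 * length ls)"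
proof -
  assume a: "ls \<in> set_pmf (G n)"
  note I = G_inv[OF a]
  have "{r\<in>{0..n}. 2 \<le> gaps ls ! r} = {r. r < length (gaps ls) \<and> 2 \<le> gaps ls ! r}"
    using I by (auto simp: length_gaps)
  then have "card {r\<in>{0..n}. 2 \<le> gaps ls ! r} = length (filter (\<lambda>s. 2 \<le> s) (gaps ls))"
    by (simp add: length_filter_conv_card)
  moreover have "length (filter (\<lambda>s. 2 \<le> s) (gaps ls)) = 3 * (Suc n - 2 * length ls)"
  proof (cases n)
    case 0 then show ?thesis using I by (simp add: gaps_def)
  next
    case (Suc n') then show ?thesis using I count_big[of ls] by simp
  qed
  ultimately show ?thesis by simp
qed

lemma map_pmf_pred_pmf_of_set:
  assumes "finite S" "S \<noteq> {}"
  shows "map_pmf P (pmf_of_set S) = bernoulli_pmf (real (card {x\<in>S. P x}) / real (card S))"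
proof (rule pmf_eqI)
  fix b :: bool
  have cS: "card S > 0" using assms by (simp add: card_gt_0_iff)
  have le: "card {x\<in>S. P x} \<le> card S" using assms by (intro card_mono) auto
  have part: "card {x\<in>S. P x} + card {x\<in>S. \<not> P x} = card S"
  proof -
    have "card ({x\<in>S. P x} \<union> {x\<in>S. \<not> P x}) = card {x\<in>S. P x} + card {x\<in>S. \<not> P x}"
      using assms by (intro card_Un_disjoint) auto
    moreover have "{x\<in>S. P x} \<union> {x\<in>S. \<not> P x} = S" by auto
    ultimately show ?thesis by simp
  qed
  have p01: "0 \<le> real (card {x\<in>S. P x}) / real (card S)" "real (card {x\<in>S. P x}) / real (card S) \<le> 1"
    using le cS by (auto simp: divide_le_eq)
  show "pmf (map_pmf P (pmf_of_set S)) b = pmf (bernoulli_pmf (real (card {x\<in>S. P x}) / real (card S))) b"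
  proof (cases b)
    case True
    have "P -` {True} = {x. P x}" by auto
    then show ?thesis using True assms p01 by (simp add: pmf_map measure_pmf_of_set Int_def conj_commute)
  next
    case False
    have "P -` {False} = {x. \<not> P x}" by auto
    moreover have "real (card {x\<in>S. \<not> P x}) / real (card S) = 1 - real (card {x\<in>S. P x}) / real (card S)"
      using part cS by (simp add: field_simps flip: of_nat_add)
    ultimately show ?thesis using False assms p01 by (simp add: pmf_map measure_pmf_of_set Int_def conj_commute)
  qed
qed

lemma G_Lc: "map_pmf length (G n) = Lc n"
proof (induction n)
  case 0 then show ?case by (simp add: G_0 Lc_0)
next
  case (Suc n)
  have "map_pmf length (G (Suc n)) = G n \<bind> (\<lambda>ls. map_pmf (\<lambda>r. length (upd 1 ls r)) (pmf_of_set {0..n}))"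
    by (simp add: G_Suc map_bind_pmf pmf.map_comp o_def)
  also have "\<dots> = G n \<bind> (\<lambda>ls. step n (length ls))"
  proof (intro bind_pmf_cong refl)
    fix ls assume a: "ls \<in> set_pmf (G n)"
    note I = G_inv[OF a]
    let ?L = "length ls"
    have "map_pmf (\<lambda>r. length (upd 1 ls r)) (pmf_of_set {0..n}) =
          map_pmf (\<lambda>b. if b then Suc ?L else ?L) (map_pmf (\<lambda>r. 2 \<le> gaps ls ! r) (pmf_of_set {0..n}))"
      unfolding pmf.map_comp o_def
    proof (intro map_pmf_cong refl)
      fix r assume "r \<in> set_pmf (pmf_of_set {0..n::nat})"
      then have "r < length (gaps ls)" using I by (simp add: length_gaps)
      then show "length (upd 1 ls r) = (if 2 \<le> gaps ls ! r then Suc ?L else ?L)" by (simp add: length_upd)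
    qed
    also have "map_pmf (\<lambda>r. 2 \<le> gaps ls ! r) (pmf_of_set {0..n}) = bernoulli_pmf (qf n ?L)"
      using map_pmf_pred_pmf_of_set[of "{0..n}" "\<lambda>r. 2 \<le> gaps ls ! r"] count_split[OF a]
      by (simp add: qf_def)
    finally show "map_pmf (\<lambda>r. length (upd 1 ls r)) (pmf_of_set {0..n}) = step n (length ls)"
      by (simp add: step_def)
  qed
  also have "\<dots> = map_pmf length (G n) \<bind> step n" by (simp add: map_pmf_def bind_assoc_pmf bind_return_pmf)
  finally show ?case using Suc by (simp add: Lc_Suc)
qed

lemma L_dist_Lc: "L_dist n = map_pmf real (Lc n)"
proof -
  have "L_dist n = map_pmf real (map_pmf (\<lambda>xs. leaves (build 1 xs)) (pmf_of_set (permutations_of_set {1..n})))"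
    by (simp add: L_dist_def pmf.map_comp o_def)
  also have "map_pmf (\<lambda>xs. leaves (build 1 xs)) (pmf_of_set (permutations_of_set {1..n})) =
     map_pmf length (map_pmf (\<lambda>xs. leafsizes (build 1 xs)) (pmf_of_set (permutations_of_set {1..n})))"
    by (simp add: pmf.map_comp o_def leaves_leafsizes)
  also have "\<dots> = Lc n" using perm_dist[of "{1..n}"] G_Lc[of n] by simp
  finally show ?thesis .
qed


lemma step_supp: "b \<in> set_pmf (step n L) \<Longrightarrow> b = L \<or> b = Suc L"
  by (auto simp: step_def)

lemma step_supp_True: "0 \<le> qf n L \<Longrightarrow> qf n L \<le> 1 \<Longrightarrow> Suc L \<in> set_pmf (step n L) \<Longrightarrow> 0 < qf n L"
proof -
  assume a: "0 \<le> qf n L" "qf n L \<le> 1" "Suc L \<in> set_pmf (step n L)"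
  then have "True \<in> set_pmf (bernoulli_pmf (qf n L))" by (auto simp: step_def split: if_splits)
  then have "pmf (bernoulli_pmf (qf n L)) True \<noteq> 0" by (simp add: set_pmf_eq)
  then show ?thesis using a by simp
qed

lemma step_supp_False: "0 \<le> qf n L \<Longrightarrow> qf n L \<le> 1 \<Longrightarrow> L \<in> set_pmf (step n L) \<Longrightarrow> qf n L < 1"
proof -
  assume a: "0 \<le> qf n L" "qf n L \<le> 1" "L \<in> set_pmf (step n L)"
  then have "False \<in> set_pmf (bernoulli_pmf (qf n L))" by (auto simp: step_def split: if_splits)
  then have "pmf (bernoulli_pmf (qf n L)) False \<noteq> 0" by (simp add: set_pmf_eq)
  then show ?thesis using a by simp
qed

lemma Lc_supp: "L \<in> set_pmf (Lc n) \<Longrightarrow> 1 \<le> L \<and> L \<le> Suc n \<and> (n = 0 \<longrightarrow> L = 1) \<and>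
   (0 < n \<longrightarrow> Suc n \<le> 3 * L \<and> 2 * L \<le> Suc n)"
proof (induction n arbitrary: L)
  case 0 then show ?case by (simp add: Lc_0)
next
  case (Suc n)
  then obtain L0 where L0: "L0 \<in> set_pmf (Lc n)" and L: "L \<in> set_pmf (step n L0)" by (auto simp: Lc_Suc)
  note I = Suc.IH[OF L0]
  have q0: "0 \<le> qf n L0" by (simp add: qf_def)
  show ?case
  proof (cases "n = 0")
    case True
    then have "L0 = 1" using I by simp
    then have "qf n L0 = 0" using True by (simp add: qf_def)
    then have "L = L0" using step_supp[OF L] step_supp_True[of n L0] L by auto
    then show ?thesis using I True by simp
  next
    case False
    then have I': "Suc n \<le> 3 * L0" "2 * L0 \<le> Suc n" "1 \<le> L0" "L0 \<le> Suc n" using I by auto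
    have q1: "qf n L0 \<le> 1"
    proof -
      have "real (Suc n - 2 * L0) = real (Suc n) - 2 * real L0" using I' by (simp add: of_nat_diff)
      then show ?thesis using I' unfolding qf_def by (simp add: field_simps)
    qed
    from step_supp[OF L] show ?thesis
    proof
      assume "L = L0"
      then have "qf n L0 < 1" using step_supp_False[OF q0 q1] L by simp
      then have "Suc n < 3 * L0"
      proof -
        assume "qf n L0 < 1"
        then have "3 * real (Suc n - 2 * L0) < real (Suc n)" by (simp add: qf_def field_simps)
        then show ?thesis using I' by (simp add: of_nat_diff)
      qed
      then show ?thesis using \<open>L = L0\<close> I' by simp
    next
      assume "L = Suc L0"
      then have "0 < qf n L0" using step_supp_True[OF q0 q1] L by simp
      then have "Suc n - 2 * L0 > 0" by (auto simp: qf_def zero_less_divide_iff)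
      then have "2 * L0 < Suc n" by simp
      then show ?thesis using \<open>L = Suc L0\<close> I' by simp
    qed
  qed
qed

lemma q01: "L \<in> set_pmf (Lc n) \<Longrightarrow> 0 \<le> qf n L \<and> qf n L \<le> 1"
proof -
  assume a: "L \<in> set_pmf (Lc n)"
  note I = Lc_supp[OF a]
  show ?thesis
  proof (cases "n = 0")
    case True then show ?thesis using I by (simp add: qf_def)
  next
    case False
    then have "real (Suc n - 2 * L) = real (Suc n) - 2 * real L" using I by (simp add: of_nat_diff)
    then show ?thesis using I False unfolding qf_def by (simp add: field_simps)
  qed
qed

lemma q_formula: "0 < n \<Longrightarrow> L \<in> set_pmf (Lc n) \<Longrightarrow> qf n L = 3 - 6 * real L / real (Suc n)"
proof -
  assume a: "0 < n" "L \<in> set_pmf (Lc n)"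
  then have "real (Suc n - 2 * L) = real (Suc n) - 2 * real L" using Lc_supp[OF a(2)] by (simp add: of_nat_diff)
  then show ?thesis unfolding qf_def by (simp add: field_simps)
qed

definition EE :: "nat \<Rightarrow> (nat \<Rightarrow> 'a::real_vector) \<Rightarrow> 'a" where
  "EE n g = (\<Sum>L\<le>Suc n. pmf (Lc n) L *\<^sub>R g L)"

lemma integral_Lc: "(\<integral>L. g L \<partial>measure_pmf (Lc n)) = EE n (g :: nat \<Rightarrow> 'a::{banach, second_countable_topology})"
  unfolding EE_def by (rule integral_measure_pmf) (use Lc_supp in auto)

lemma EE_cong: "(\<And>L. L \<in> set_pmf (Lc n) \<Longrightarrow> g L = h L) \<Longrightarrow> EE n g = EE n h"
  unfolding EE_def by (intro sum.cong refl) (metis pmf_eq_0_set_pmf scale_zero_left)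

lemma EE_add: "EE n (\<lambda>L. g L + h L) = EE n g + EE n h"
  by (simp add: EE_def scaleR_add_right sum.distrib)

lemma EE_scale: "EE n (\<lambda>L. c *\<^sub>R g L) = c *\<^sub>R EE n g"
  by (simp add: EE_def scaleR_sum_right mult.commute del: sum.atMost_Suc)

lemma EE_mult: "EE n (\<lambda>L. c * g L) = c * (EE n g :: real)"
  using EE_scale[of n c g] by simp

lemma EE_diff: "EE n (\<lambda>L. g L - h L) = EE n g - EE n h"
  by (simp add: EE_def scaleR_diff_right sum_subtractf)

lemma EE_const: "EE n (\<lambda>L. c) = c"
proof -
  have "(\<Sum>L\<le>Suc n. pmf (Lc n) L) = 1"
    using sum_pmf_eq_1[of "{..Suc n}" "Lc n"] Lc_supp by auto
  then show ?thesis by (simp add: EE_def flip: scaleR_sum_left)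
qed

lemma EE_mono: "(\<And>L. L \<in> set_pmf (Lc n) \<Longrightarrow> g L \<le> h L) \<Longrightarrow> EE n g \<le> (EE n h :: real)"
  unfolding EE_def
proof (intro sum_mono)
  fix L assume "\<And>L. L \<in> set_pmf (Lc n) \<Longrightarrow> g L \<le> h L"
  then show "pmf (Lc n) L *\<^sub>R g L \<le> pmf (Lc n) L *\<^sub>R h L"
    by (cases "L \<in> set_pmf (Lc n)") (auto simp: mult_left_mono set_pmf_eq)
qed

lemma EE_norm: "norm (EE n g) \<le> EE n (\<lambda>L. norm (g L))"
  unfolding EE_def by (rule order.trans[OF norm_sum]) simp

lemma integral_step:
  fixes g :: "nat \<Rightarrow> 'a::{banach, second_countable_topology}"
  assumes "0 \<le> qf n L" "qf n L \<le> 1"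
  shows "(\<integral>b. g b \<partial>measure_pmf (step n L)) = qf n L *\<^sub>R g (Suc L) + (1 - qf n L) *\<^sub>R g L"
proof -
  have "(\<integral>b. g b \<partial>measure_pmf (step n L)) = (\<integral>b. g (if b then Suc L else L) \<partial>measure_pmf (bernoulli_pmf (qf n L)))"
    by (simp add: step_def)
  also have "\<dots> = (\<Sum>b\<in>UNIV. pmf (bernoulli_pmf (qf n L)) b *\<^sub>R g (if b then Suc L else L))"
    by (rule integral_measure_pmf) auto
  also have "\<dots> = qf n L *\<^sub>R g (Suc L) + (1 - qf n L) *\<^sub>R g L"
    using assms by (simp add: UNIV_bool)
  finally show ?thesis .
qed

lemma EE_Suc: fixes g :: "nat \<Rightarrow> 'a::{banach, second_countable_topology}"
  shows "EE (Suc n) g = EE n (\<lambda>L. qf n L *\<^sub>R g (Suc L) + (1 - qf n L) *\<^sub>R g L)"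
proof -
  have "EE (Suc n) g = (\<Sum>a\<le>Suc (Suc n). (\<Sum>L\<le>Suc n. pmf (Lc n) L * pmf (step n L) a) *\<^sub>R g a)"
  proof -
    have "pmf (Lc (Suc n)) a = (\<Sum>L\<le>Suc n. pmf (Lc n) L * pmf (step n L) a)" for a
      unfolding Lc_Suc pmf_bind
      by (subst integral_measure_pmf_real[where A="{..Suc n}"]) (use Lc_supp in \<open>auto simp: mult.commute\<close>)
    then show ?thesis by (simp add: EE_def)
  qed
  also have "\<dots> = (\<Sum>L\<le>Suc n. pmf (Lc n) L *\<^sub>R (\<Sum>a\<le>Suc (Suc n). pmf (step n L) a *\<^sub>R g a))"
    by (simp add: scaleR_sum_left scaleR_sum_right sum.swap[of _ "{..Suc (Suc n)}"] del: sum.atMost_Suc)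
  also have "\<dots> = EE n (\<lambda>L. qf n L *\<^sub>R g (Suc L) + (1 - qf n L) *\<^sub>R g L)"
    unfolding EE_def
  proof (intro sum.cong refl)
    fix L assume L: "L \<in> {..Suc n}"
    show "pmf (Lc n) L *\<^sub>R (\<Sum>a\<le>Suc (Suc n). pmf (step n L) a *\<^sub>R g a) =
          pmf (Lc n) L *\<^sub>R (qf n L *\<^sub>R g (Suc L) + (1 - qf n L) *\<^sub>R g L)"
    proof (cases "L \<in> set_pmf (Lc n)")
      case True
      have "(\<Sum>a\<le>Suc (Suc n). pmf (step n L) a *\<^sub>R g a) = (\<integral>b. g b \<partial>measure_pmf (step n L))"
      proof (rule integral_measure_pmf[symmetric])
        fix a assume "a \<in> set_pmf (step n L)"
        then show "a \<in> {..Suc (Suc n)}" using L step_supp[of a n L] by auto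
      qed simp
      then show ?thesis using integral_step[of n L g] q01[OF True] by simp
    next
      case False then show ?thesis by (simp add: set_pmf_eq)
    qed
  qed
  finally show ?thesis .
qed


definition mu :: "nat \<Rightarrow> real" where "mu n = EE n (\<lambda>L. real L)"
definition nu :: "nat \<Rightarrow> real" where "nu n = EE n (\<lambda>L. real L ^ 2)"

lemma mu_rec: "0 < n \<Longrightarrow> mu (Suc n) = (1 - 6 / real (Suc n)) * mu n + 3"
proof -
  assume n: "0 < n"
  have "mu (Suc n) = EE n (\<lambda>L. qf n L * real (Suc L) + (1 - qf n L) * real L)"
    by (simp add: mu_def EE_Suc)
  also have "\<dots> = EE n (\<lambda>L. (1 - 6 / real (Suc n)) * real L + 3)"
  proof (intro EE_cong)
    fix L assume L: "L \<in> set_pmf (Lc n)"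
    have "qf n L * real (Suc L) + (1 - qf n L) * real L = real L + qf n L" by (simp add: algebra_simps)
    also have "\<dots> = (1 - 6 / real (Suc n)) * real L + 3" by (simp add: q_formula[OF n L] algebra_simps)
    finally show "qf n L * real (Suc L) + (1 - qf n L) * real L = (1 - 6 / real (Suc n)) * real L + 3" .
  qed
  also have "\<dots> = (1 - 6 / real (Suc n)) * mu n + 3"
    by (simp add: EE_add EE_mult EE_const mu_def)
  finally show ?thesis .
qed

lemma nu_rec: "0 < n \<Longrightarrow> nu (Suc n) = (1 - 12 / real (Suc n)) * nu n + (6 - 6 / real (Suc n)) * mu n + 3"
proof -
  assume n: "0 < n"
  have "nu (Suc n) = EE n (\<lambda>L. qf n L * real (Suc L) ^ 2 + (1 - qf n L) * real L ^ 2)"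
    by (simp add: nu_def EE_Suc)
  also have "\<dots> = EE n (\<lambda>L. (1 - 12 / real (Suc n)) * real L ^ 2 + ((6 - 6 / real (Suc n)) * real L + 3))"
  proof (intro EE_cong)
    fix L assume L: "L \<in> set_pmf (Lc n)"
    have "qf n L * real (Suc L) ^ 2 + (1 - qf n L) * real L ^ 2 = real L ^ 2 + qf n L * (2 * real L + 1)"
      by (simp add: algebra_simps power2_eq_square)
    also have "\<dots> = (1 - 12 / real (Suc n)) * real L ^ 2 + ((6 - 6 / real (Suc n)) * real L + 3)"
      by (simp add: q_formula[OF n L] algebra_simps power2_eq_square add_divide_distrib)
    finally show "qf n L * real (Suc L) ^ 2 + (1 - qf n L) * real L ^ 2 =
      (1 - 12 / real (Suc n)) * real L ^ 2 + ((6 - 6 / real (Suc n)) * real L + 3)" .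
  qed
  also have "\<dots> = (1 - 12 / real (Suc n)) * nu n + (6 - 6 / real (Suc n)) * mu n + 3"
    by (simp add: EE_add EE_mult EE_const mu_def nu_def)
  finally show ?thesis .
qed

lemma mu_exact: "6 \<le> n \<Longrightarrow> mu n = 3 * (real n + 1) / 7"
proof (induction n rule: nat_induct_at_least)
  case base
  show ?case using mu_rec[of 5] by (simp add: numeral_eq_Suc)
next
  case (Suc n)
  have "mu (Suc n) = (1 - 6 / (real n + 1)) * (3 * (real n + 1) / 7) + 3" using mu_rec[of n] Suc by simp
  also have "\<dots> = 3 * (real (Suc n) + 1) / 7" by (simp add: field_simps)
  finally show ?case .
qed

lemma nu_exact: "12 \<le> n \<Longrightarrow> nu n = (3 * (real n + 1) / 7)^2 + 12 / 637 * (real n + 1)"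
proof (induction n rule: nat_induct_at_least)
  case base
  have "mu 11 = 36 / 7" using mu_exact[of 11] by simp
  then show ?case using nu_rec[of 11] by (simp add: numeral_eq_Suc)
next
  case (Suc n)
  have m: "mu n = 3 * (real n + 1) / 7" using mu_exact Suc by simp
  have "nu (Suc n) = (1 - 12 / (real n + 1)) * ((3 * (real n + 1) / 7)^2 + 12 / 637 * (real n + 1))
      + (6 - 6 / (real n + 1)) * (3 * (real n + 1) / 7) + 3" using nu_rec[of n] Suc m by (simp add: add.commute)
  also have "\<dots> = (3 * (real (Suc n) + 1) / 7)^2 + 12 / 637 * (real (Suc n) + 1)"
  proof -
    have "(1 - 12 / x) * ((3 * x / 7)^2 + 12 / 637 * x) + (6 - 6 / x) * (3 * x / 7) + 3 =
       (3 * (x + 1) / 7)^2 + 12 / 637 * (x + 1)" if "x > 0" for x :: real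
      using that by (simp add: field_simps power2_eq_square)
    from this[of "real n + 1"] show ?thesis by (simp add: add.commute)
  qed
  finally show ?case .
qed

lemma expectation_L: "measure_pmf.expectation (L_dist n) (\<lambda>x. x) = mu n"
  by (simp add: L_dist_Lc integral_Lc mu_def)

lemma variance_L: "measure_pmf.variance (L_dist n) (\<lambda>x. x) = nu n - (mu n)^2"
proof -
  have "measure_pmf.variance (L_dist n) (\<lambda>x. x) = EE n (\<lambda>L. (real L - mu n)^2)"
    by (simp add: expectation_L) (simp add: L_dist_Lc integral_Lc)
  also have "\<dots> = EE n (\<lambda>L. real L ^ 2 + ((- 2 * mu n) * real L + (mu n)^2))"
    by (intro EE_cong) (simp add: power2_eq_square algebra_simps)
  also have "\<dots> = EE n (\<lambda>L. real L ^ 2) + ((- 2 * mu n) * EE n (\<lambda>L. real L) + (mu n)^2)"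
    by (simp only: EE_add EE_mult EE_const)
  also have "\<dots> = nu n - (mu n)^2"
    unfolding mu_def[symmetric] nu_def[symmetric] by (simp add: power2_eq_square)
  finally show ?thesis .
qed

lemma part1: "n > 11 \<Longrightarrow> measure_pmf.expectation (L_dist n) (\<lambda>x. x) = 3 / 7 * (real n + 1) \<and>
            measure_pmf.variance (L_dist n) (\<lambda>x. x) = 12 / 637 * (real n + 1)"
proof -
  assume n: "n > 11"
  have m: "mu n = 3 * (real n + 1) / 7" using mu_exact n by simp
  have v: "nu n = (3 * (real n + 1) / 7)^2 + 12 / 637 * (real n + 1)" using nu_exact n by simp
  have a: "measure_pmf.expectation (L_dist n) (\<lambda>x. x) = 3 / 7 * (real n + 1)"
    using expectation_L[of n] m by simp
  have b: "measure_pmf.variance (L_dist n) (\<lambda>x. x) = 12 / 637 * (real n + 1)"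
    by (subst variance_L) (simp add: m v field_simps power2_eq_square)
  show ?thesis by (intro conjI a b)
qed


lemma expm_bound: "0 \<le> (y::real) \<Longrightarrow> \<bar>exp (- y) - (1 - y)\<bar> \<le> y^2 / 2"
proof -
  assume y: "0 \<le> y"
  have lo: "1 - y \<le> exp (- y)" using exp_ge_add_one_self[of "-y"] by simp
  define D where "D = 1 + y + y^2 / 2"
  have D: "D \<le> exp y" using exp_lower_Taylor_quadratic[OF y] by (simp add: D_def)
  have Dpos: "0 < D" using y by (simp add: D_def add_pos_nonneg)
  have "exp (- y) = 1 / exp y" by (simp add: exp_minus field_simps)
  also have "\<dots> \<le> 1 / D" using D Dpos by (intro divide_left_mono) auto
  also have "\<dots> \<le> 1 - y + y^2 / 2"
  proof -
    have "1 \<le> D * (1 - y + y^2 / 2)" unfolding D_def by (simp add: algebra_simps power2_eq_square power4_eq_xxxx)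
      (smt (verit) mult_nonneg_nonneg y zero_le_mult_iff)
    then show ?thesis using Dpos by (simp add: divide_le_eq mult.commute)
  qed
  finally show ?thesis using lo by simp
qed

lemma taylor2: "cmod (iexp x - (1 + \<i> * complex_of_real x - complex_of_real (x^2 / 2))) \<le> \<bar>x\<bar>^3 / 6"
proof -
  have "(\<Sum>k\<le>2. (\<i> * complex_of_real x)^k / fact k) = 1 + \<i> * complex_of_real x - complex_of_real (x^2 / 2)"
    by (simp add: numeral_2_eq_2 power2_eq_square field_simps)
  then show ?thesis using iexp_approx1[of x 2] by (simp add: numeral_3_eq_3)
qed

definition phi :: "real \<Rightarrow> real \<Rightarrow> complex" where
  "phi q th = complex_of_real q * iexp (th * (1 - q)) + complex_of_real (1 - q) * iexp (- (th * q))"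

lemma phi_bound:
  assumes q: "0 \<le> q" "q \<le> 1"
  shows "cmod (phi q th - complex_of_real (1 - th^2 * (q * (1 - q)) / 2)) \<le> \<bar>th\<bar>^3 / 6"
proof -
  define a where "a = th * (1 - q)"
  define b where "b = - (th * q)"
  let ?T = "\<lambda>x::real. 1 + \<i> * complex_of_real x - complex_of_real (x^2 / 2)"
  have id: "phi q th - complex_of_real (1 - th^2 * (q * (1 - q)) / 2) =
     complex_of_real q * (iexp a - ?T a) + complex_of_real (1 - q) * (iexp b - ?T b)"
    unfolding phi_def a_def b_def
    by (simp add: algebra_simps power2_eq_square) (simp add: field_simps)
  have "cmod (phi q th - complex_of_real (1 - th^2 * (q * (1 - q)) / 2)) \<le>
     q * cmod (iexp a - ?T a) + (1 - q) * cmod (iexp b - ?T b)"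
  proof -
    have c1: "cmod (1 - complex_of_real q) = 1 - q"
      using q by (metis abs_of_nonneg diff_ge_0_iff_ge norm_of_real of_real_1 of_real_diff)
    show ?thesis unfolding id using q c1 by (auto intro!: order.trans[OF norm_triangle_ineq] simp: norm_mult)
  qed
  also have "\<dots> \<le> q * (\<bar>a\<bar>^3 / 6) + (1 - q) * (\<bar>b\<bar>^3 / 6)"
    using q by (intro add_mono mult_left_mono taylor2) auto
  also have "\<dots> \<le> q * (\<bar>th\<bar>^3 / 6) + (1 - q) * (\<bar>th\<bar>^3 / 6)"
  proof -
    have "\<bar>a\<bar> \<le> \<bar>th\<bar>" "\<bar>b\<bar> \<le> \<bar>th\<bar>" using q by (auto simp: a_def b_def abs_mult mult_left_le)
    then have "\<bar>a\<bar>^3 \<le> \<bar>th\<bar>^3" "\<bar>b\<bar>^3 \<le> \<bar>th\<bar>^3" by (auto intro: power_mono)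
    then show ?thesis using q by (intro add_mono mult_left_mono) auto
  qed
  also have "\<dots> = \<bar>th\<bar>^3 / 6" by (simp add: field_simps)
  finally show ?thesis .
qed

lemma phi_exp_bound:
  assumes q: "0 \<le> q" "q \<le> 1" and Q: "0 \<le> Q" "Q \<le> 1"
  shows "cmod (phi q th - complex_of_real (exp (- (th^2 * Q / 2)))) \<le>
     \<bar>th\<bar>^3 / 6 + th^2 / 2 * \<bar>q * (1 - q) - Q\<bar> + th^4 / 8"
proof -
  have e1: "cmod (complex_of_real (1 - th^2 * (q * (1 - q)) / 2) - complex_of_real (1 - th^2 * Q / 2))
     = th^2 / 2 * \<bar>q * (1 - q) - Q\<bar>"
  proof -
    have "1 - th^2 * (q * (1 - q)) / 2 - (1 - th^2 * Q / 2) = th^2 / 2 * (Q - q * (1 - q))"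
      by (simp add: field_simps)
    then have "\<bar>1 - th^2 * (q * (1 - q)) / 2 - (1 - th^2 * Q / 2)\<bar> = \<bar>th^2 / 2\<bar> * \<bar>Q - q * (1 - q)\<bar>"
      by (simp only: abs_mult)
    then have "\<bar>1 - th^2 * (q * (1 - q)) / 2 - (1 - th^2 * Q / 2)\<bar> = th^2 / 2 * \<bar>q * (1 - q) - Q\<bar>"
      by (simp add: abs_minus_commute)
    then show ?thesis by (metis norm_of_real of_real_diff)
  qed
  have e2: "cmod (complex_of_real (1 - th^2 * Q / 2) - complex_of_real (exp (- (th^2 * Q / 2)))) \<le> th^4 / 8"
  proof -
    have "\<bar>exp (- (th^2 * Q / 2)) - (1 - th^2 * Q / 2)\<bar> \<le> (th^2 * Q / 2)^2 / 2"
      using Q by (intro expm_bound) auto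
    also have "\<dots> \<le> th^4 / 8"
    proof -
      have "(th^2 * Q)^2 \<le> (th^2)^2" using Q by (intro power_mono) (auto simp: mult_left_le)
      then show ?thesis by (simp add: power_mult_distrib power2_eq_square field_simps power4_eq_xxxx)
    qed
    finally show ?thesis by (simp flip: of_real_diff add: abs_minus_commute)
  qed
  have "cmod (phi q th - complex_of_real (exp (- (th^2 * Q / 2)))) \<le>
     cmod (phi q th - complex_of_real (1 - th^2 * (q * (1 - q)) / 2)) +
     cmod (complex_of_real (1 - th^2 * (q * (1 - q)) / 2) - complex_of_real (1 - th^2 * Q / 2)) +
     cmod (complex_of_real (1 - th^2 * Q / 2) - complex_of_real (exp (- (th^2 * Q / 2))))"
    by (smt (verit) norm_triangle_ineq4 norm_diff_triangle_ineq diff_add_cancel add_diff_eq norm_triangle_ineq)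
  then show ?thesis using phi_bound[OF q, of th] e1 e2 by linarith
qed

lemma sum_inv_sqrt: "(\<Sum>j<n. 1 / sqrt (real j + 1)) \<le> 2 * sqrt (real n)"
proof (induction n)
  case (Suc n)
  have key: "2 * sqrt (real n) + 1 / sqrt (real n + 1) \<le> 2 * sqrt (real n + 1)"
  proof -
    have s: "0 < sqrt (real n + 1)" by simp
    have "sqrt (real n) * sqrt (real n + 1) \<le> real n + 1 / 2"
    proof -
      have "sqrt (real n) * sqrt (real n + 1) = sqrt (real n * (real n + 1))" by (simp add: real_sqrt_mult)
      also have "\<dots> \<le> sqrt ((real n + 1/2)^2)" by (intro real_sqrt_le_mono) (simp add: power2_eq_square algebra_simps)
      also have "\<dots> = real n + 1/2" by simp
      finally show ?thesis .
    qed
    then have "2 * sqrt (real n) * sqrt (real n + 1) + 1 \<le> 2 * (sqrt (real n + 1) * sqrt (real n + 1))"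
      by simp
    then show ?thesis using s by (simp add: field_simps)
  qed
  show ?case using Suc key by (simp add: add.commute)
qed simp


definition Xf :: "nat \<Rightarrow> nat \<Rightarrow> real" where "Xf k L = real L - 3 * (real k + 1) / 7"
definition wgt :: "nat \<Rightarrow> nat \<Rightarrow> real" where "wgt n k = (\<Prod>j\<in>{k..<n}. (1 - 6 / real (Suc j)))"
definition c2 :: "nat \<Rightarrow> real" where "c2 n = 12 / 637 * (real n + 1)"
definition Vx :: "nat \<Rightarrow> real" where "Vx k = EE k (\<lambda>L. (Xf k L)^2)"
definition Qv :: "nat \<Rightarrow> real" where "Qv j = EE j (\<lambda>L. qf j L * (1 - qf j L))"
definition Sf :: "nat \<Rightarrow> nat \<Rightarrow> real" where "Sf n k = (Vx n - (wgt n k)^2 * Vx k) / c2 n"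

lemma c2_pos: "0 < c2 n" by (simp add: c2_def)

lemma wgt_step: "j < n \<Longrightarrow> wgt n j = (1 - 6 / real (Suc j)) * wgt n (Suc j)"
  unfolding wgt_def by (simp add: prod.atLeast_Suc_lessThan)

lemma wgt_n: "wgt n n = 1" by (simp add: wgt_def)

lemma wgt_bounds: "5 \<le> k \<Longrightarrow> 0 \<le> wgt n k \<and> wgt n k \<le> 1"
proof -
  assume k: "5 \<le> k"
  have f: "0 \<le> 1 - 6 / real (Suc j) \<and> 1 - 6 / real (Suc j) \<le> 1" if "j \<in> {k..<n}" for j
    using that k by (auto simp: field_simps)
  show ?thesis unfolding wgt_def using f by (auto intro!: prod_nonneg prod_le_1)
qed

lemma wgt_5: "5 < n \<Longrightarrow> wgt n 5 = 0"
  using wgt_step[of 5 n] by simp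

lemma qX: "0 < j \<Longrightarrow> L \<in> set_pmf (Lc j) \<Longrightarrow> qf j L = 3 / 7 - 6 * Xf j L / real (Suc j)"
  using q_formula[of j L] by (simp add: Xf_def field_simps)

lemma Xf_Suc1: "Xf (Suc j) (Suc L) = Xf j L + 4 / 7" by (simp add: Xf_def field_simps)
lemma Xf_Suc0: "Xf (Suc j) L = Xf j L - 3 / 7" by (simp add: Xf_def field_simps)

lemma EE_Suc_X:
  fixes g :: "real \<Rightarrow> 'a::{banach, second_countable_topology}"
  shows "EE (Suc j) (\<lambda>L. g (Xf (Suc j) L)) =
    EE j (\<lambda>L. qf j L *\<^sub>R g (Xf j L + 4/7) + (1 - qf j L) *\<^sub>R g (Xf j L - 3/7))"
  using EE_Suc[of j "\<lambda>L. g (Xf (Suc j) L)"] by (simp only: Xf_Suc1) (simp only: Xf_Suc0)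

lemma Xq: "0 < j \<Longrightarrow> L \<in> set_pmf (Lc j) \<Longrightarrow> Xf j L + qf j L - 3 / 7 = (1 - 6 / real (Suc j)) * Xf j L"
  using qX[of j L] by (simp add: algebra_simps)

lemma Vx_step: "0 < j \<Longrightarrow> Vx (Suc j) = (1 - 6 / real (Suc j))^2 * Vx j + Qv j"
proof -
  assume j: "0 < j"
  have "Vx (Suc j) = EE j (\<lambda>L. qf j L * (Xf j L + 4 / 7)^2 + (1 - qf j L) * (Xf j L - 3 / 7)^2)"
    unfolding Vx_def using EE_Suc_X[of j "\<lambda>x. x^2"] by simp
  also have "\<dots> = EE j (\<lambda>L. (1 - 6 / real (Suc j))^2 * (Xf j L)^2 + qf j L * (1 - qf j L))"
  proof (intro EE_cong)
    fix L assume L: "L \<in> set_pmf (Lc j)"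
    have "qf j L * (Xf j L + 4 / 7)^2 + (1 - qf j L) * (Xf j L - 3 / 7)^2
        = (Xf j L + qf j L - 3 / 7)^2 + qf j L * (1 - qf j L)"
      by (simp add: power2_eq_square field_simps)
    also have "\<dots> = (1 - 6 / real (Suc j))^2 * (Xf j L)^2 + qf j L * (1 - qf j L)"
      using Xq[OF j L] by (simp add: power_mult_distrib)
    finally show "qf j L * (Xf j L + 4 / 7)^2 + (1 - qf j L) * (Xf j L - 3 / 7)^2 =
      (1 - 6 / real (Suc j))^2 * (Xf j L)^2 + qf j L * (1 - qf j L)" .
  qed
  also have "\<dots> = (1 - 6 / real (Suc j))^2 * Vx j + Qv j"
    by (simp add: EE_add EE_mult Vx_def Qv_def)
  finally show ?thesis .
qed

lemma EE_var: "EE n (\<lambda>L. (real L - mu n)^2) = nu n - (mu n)^2"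
proof -
  have "EE n (\<lambda>L. (real L - mu n)^2) = EE n (\<lambda>L. real L ^ 2 + ((- 2 * mu n) * real L + (mu n)^2))"
    by (intro EE_cong) (simp add: power2_eq_square algebra_simps)
  also have "\<dots> = EE n (\<lambda>L. real L ^ 2) + ((- 2 * mu n) * EE n (\<lambda>L. real L) + (mu n)^2)"
    by (simp only: EE_add EE_mult EE_const)
  also have "\<dots> = nu n - (mu n)^2"
    unfolding mu_def[symmetric] nu_def[symmetric] by (simp add: power2_eq_square)
  finally show ?thesis .
qed

lemma Vx_exact: "12 \<le> n \<Longrightarrow> Vx n = c2 n"
proof -
  assume n: "12 \<le> n"
  have m: "mu n = 3 * (real n + 1) / 7" using mu_exact n by simp
  have "Vx n = EE n (\<lambda>L. (real L - mu n)^2)" by (simp add: Vx_def Xf_def m)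
  also have "\<dots> = nu n - (mu n)^2" by (rule EE_var)
  also have "\<dots> = c2 n" unfolding nu_exact[OF n] m c2_def by (simp add: field_simps power2_eq_square)
  finally show ?thesis .
qed

lemma Qv_bounds: "0 \<le> Qv j \<and> Qv j \<le> 1"
proof
  show "0 \<le> Qv j" unfolding Qv_def using EE_mono[of j "\<lambda>_. 0" "\<lambda>L. qf j L * (1 - qf j L)"] q01
    by (simp add: EE_const)
  show "Qv j \<le> 1" unfolding Qv_def using EE_mono[of j "\<lambda>L. qf j L * (1 - qf j L)" "\<lambda>_. 1"] q01
    by (simp add: EE_const mult_le_one)
qed

lemma Sf_n: "Sf n n = 0" by (simp add: Sf_def wgt_n)

lemma Sf_5: "12 \<le> n \<Longrightarrow> Sf n 5 = 1"
  using wgt_5[of n] Vx_exact[of n] c2_pos[of n] by (simp add: Sf_def)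

lemma Sf_step: "0 < j \<Longrightarrow> j < n \<Longrightarrow> Sf n j = Sf n (Suc j) + (wgt n (Suc j))^2 * Qv j / c2 n"
proof -
  assume j: "0 < j" "j < n"
  have gen: "(V - (a*w)^2 * X)/c = (V - w^2*(a^2*X + Q))/c + w^2*Q/c" if "c \<noteq> 0" for V X Q a w c :: real
    using that by (simp add: field_simps power_mult_distrib)
  show ?thesis unfolding Sf_def wgt_step[OF j(2)] Vx_step[OF j(1)]
    using gen c2_pos[of n] by simp
qed

lemma Sf_nonneg: "k \<le> n \<Longrightarrow> 0 < k \<Longrightarrow> 0 \<le> Sf n k"
proof (induction k rule: inc_induct)
  case base then show ?case by (simp add: Sf_n)
next
  case (step m)
  then show ?case using Sf_step[of m n] Qv_bounds[of m] c2_pos[of n] by simp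
qed

definition RR :: "nat \<Rightarrow> real \<Rightarrow> nat \<Rightarrow> complex" where
  "RR n t k = EE k (\<lambda>L. iexp (t * wgt n k / sqrt (c2 n) * Xf k L)) * complex_of_real (exp (- (t^2 * Sf n k / 2)))"

lemma EE_mult_right: "EE n (\<lambda>L. g L * c) = EE n g * (c :: 'a :: real_algebra)"
  by (simp add: EE_def sum_distrib_right del: sum.atMost_Suc)

lemma iexp_add: "iexp (a + b) = iexp a * iexp b"
  by (simp add: distrib_left flip: exp_add)

lemma RR_step:
  fixes n j :: nat and t :: real
  assumes j: "0 < j" "j < n"
  defines "th \<equiv> t * wgt n (Suc j) / sqrt (c2 n)"
  shows "RR n t (Suc j) - RR n t j = EE j (\<lambda>L. iexp (t * wgt n j / sqrt (c2 n) * Xf j L) *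
      (phi (qf j L) th - complex_of_real (exp (- (th^2 * Qv j / 2))))) *
      complex_of_real (exp (- (t^2 * Sf n (Suc j) / 2)))"
proof -
  define th' where "th' = t * wgt n j / sqrt (c2 n)"
  define E1 where "E1 = complex_of_real (exp (- (t^2 * Sf n (Suc j) / 2)))"
  have th': "th' = th * (1 - 6 / real (Suc j))"
    unfolding th'_def th_def wgt_step[OF j(2)] by simp
  have A: "EE (Suc j) (\<lambda>L. iexp (th * Xf (Suc j) L)) = EE j (\<lambda>L. iexp (th' * Xf j L) * phi (qf j L) th)"
  proof -
    have "EE (Suc j) (\<lambda>L. iexp (th * Xf (Suc j) L)) =
      EE j (\<lambda>L. qf j L *\<^sub>R iexp (th * (Xf j L + 4/7)) + (1 - qf j L) *\<^sub>R iexp (th * (Xf j L - 3/7)))"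
      using EE_Suc_X[of j "\<lambda>x. iexp (th * x)"] by simp
    also have "\<dots> = EE j (\<lambda>L. iexp (th' * Xf j L) * phi (qf j L) th)"
    proof (intro EE_cong)
      fix L assume L: "L \<in> set_pmf (Lc j)"
      have e1: "th * (Xf j L + 4/7) = th' * Xf j L + th * (1 - qf j L)"
      proof -
        have "th * (X + 4/7) = (th * (1 - 6/d)) * X + th * (1 - (3/7 - 6*X/d))" if "d \<noteq> 0" for d X :: real
          using that by (simp add: field_simps)
        then show ?thesis unfolding qX[OF j(1) L] th' by simp
      qed
      have e2: "th * (Xf j L - 3/7) = th' * Xf j L + (- (th * qf j L))"
      proof -
        have "th * (X - 3/7) = (th * (1 - 6/d)) * X + - (th * (3/7 - 6*X/d))" if "d \<noteq> 0" for d X :: real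
          using that by (simp add: field_simps)
        then show ?thesis unfolding qX[OF j(1) L] th' by simp
      qed
      show "qf j L *\<^sub>R iexp (th * (Xf j L + 4/7)) + (1 - qf j L) *\<^sub>R iexp (th * (Xf j L - 3/7)) =
            iexp (th' * Xf j L) * phi (qf j L) th"
        unfolding e1 e2 iexp_add phi_def by (simp add: scaleR_conv_of_real algebra_simps)
    qed
    finally show ?thesis .
  qed
  have B: "complex_of_real (exp (- (t^2 * Sf n j / 2))) = complex_of_real (exp (- (th^2 * Qv j / 2))) * E1"
  proof -
    have "t^2 * Sf n j / 2 = th^2 * Qv j / 2 + t^2 * Sf n (Suc j) / 2"
      unfolding Sf_step[OF j] th_def using c2_pos[of n]
      by (simp add: power_divide field_simps)
    then have e: "- (t^2 * Sf n j / 2) = - (th^2 * Qv j / 2) + - (t^2 * Sf n (Suc j) / 2)" by linarith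
    show ?thesis unfolding E1_def by (simp only: e exp_add of_real_mult)
  qed
  have "RR n t (Suc j) = EE j (\<lambda>L. iexp (th' * Xf j L) * phi (qf j L) th) * E1"
    unfolding RR_def E1_def using A by (simp add: th_def mult_ac)
  moreover have "RR n t j = EE j (\<lambda>L. iexp (th' * Xf j L) * complex_of_real (exp (- (th^2 * Qv j / 2)))) * E1"
    unfolding RR_def B EE_mult_right by (simp add: th'_def mult_ac)
  ultimately have "RR n t (Suc j) - RR n t j = (EE j (\<lambda>L. iexp (th' * Xf j L) * phi (qf j L) th) -
      EE j (\<lambda>L. iexp (th' * Xf j L) * complex_of_real (exp (- (th^2 * Qv j / 2))))) * E1"
    by (simp add: algebra_simps)
  also have "\<dots> = EE j (\<lambda>L. iexp (th' * Xf j L) * (phi (qf j L) th - complex_of_real (exp (- (th^2 * Qv j / 2))))) * E1"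
    by (simp add: EE_diff[symmetric] right_diff_distrib)
  finally show ?thesis unfolding th'_def E1_def .
qed


lemma EE_divide: "EE n (\<lambda>L. g L / c) = EE n g / (c::real)"
  using EE_mult[of n "1/c" g] by (simp add: field_simps)

lemma EE_mult_div: "EE n (\<lambda>L. c * g L / d) = c * EE n g / (d::real)"
  using EE_mult[of n "c/d" g] by (simp add: field_simps)

lemma Vx_bound: "0 < j \<Longrightarrow> Vx j \<le> 12 * (real j + 1)"
proof (cases "12 \<le> j")
  case True
  then show ?thesis using Vx_exact[OF True] by (simp add: c2_def)
next
  case False
  assume j: "0 < j"
  have "Vx j \<le> EE j (\<lambda>L. 12 * (real j + 1))"
    unfolding Vx_def
  proof (intro EE_mono)
    fix L assume L: "L \<in> set_pmf (Lc j)"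
    have "L \<le> Suc j" using Lc_supp[OF L] by simp
    then have a: "real L \<le> real j + 1" by simp
    have b: "0 \<le> 3 * (real j + 1) / 7" "3 * (real j + 1) / 7 \<le> real j + 1" by auto
    have c: "0 \<le> real L" by simp
    have "\<bar>Xf j L\<bar> \<le> real j + 1" unfolding Xf_def abs_le_iff using a b c by (intro conjI) linarith+
    then have "(Xf j L)^2 \<le> (real j + 1)^2" using power_mono[of "\<bar>Xf j L\<bar>" "real j + 1" 2] by simp
    also have "\<dots> \<le> 12 * (real j + 1)"
    proof -
      have h: "real j + 1 \<le> 12" using False by simp
      have "(real j + 1) * (real j + 1) \<le> 12 * (real j + 1)" by (rule mult_right_mono[OF h]) simp
      then show ?thesis by (simp add: power2_eq_square)
    qed
    finally show "(Xf j L)^2 \<le> 12 * (real j + 1)" .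
  qed
  then show ?thesis by (simp add: EE_const)
qed

lemma EE_absX: "0 < j \<Longrightarrow> EE j (\<lambda>L. \<bar>Xf j L\<bar>) \<le> 13 / 2 * sqrt (real j + 1)"
proof -
  assume j: "0 < j"
  define s where "s = sqrt (real j + 1)"
  have s: "0 < s" "s^2 = real j + 1" by (simp_all add: s_def)
  have "EE j (\<lambda>L. \<bar>Xf j L\<bar>) \<le> EE j (\<lambda>L. s / 2 + 1 / (2 * s) * (Xf j L)^2)"
  proof (intro EE_mono)
    fix L
    have "0 \<le> (\<bar>Xf j L\<bar> - s)^2" by simp
    then have "2 * s * \<bar>Xf j L\<bar> \<le> s^2 + (Xf j L)^2" by (simp add: power2_eq_square algebra_simps)
    then show "\<bar>Xf j L\<bar> \<le> s / 2 + 1 / (2 * s) * (Xf j L)^2" using s by (simp add: field_simps power2_eq_square)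
  qed
  also have "\<dots> = s / 2 + 1 / (2 * s) * Vx j" by (simp add: EE_add EE_mult EE_const Vx_def EE_divide)
  also have "\<dots> \<le> s / 2 + 1 / (2 * s) * (12 * s^2)"
    using Vx_bound[OF j] s by (intro add_left_mono mult_left_mono) auto
  also have "\<dots> = 13 / 2 * s" using s by (simp add: field_simps power2_eq_square)
  finally show ?thesis by (simp add: s_def)
qed

lemma absdev: "5 \<le> j \<Longrightarrow> EE j (\<lambda>L. \<bar>qf j L * (1 - qf j L) - Qv j\<bar>) \<le> 78 / sqrt (real j + 1)"
proof -
  assume j5: "5 \<le> j"
  then have j: "0 < j" by simp
  define s where "s = sqrt (real j + 1)"
  have s: "0 < s" "s^2 = real j + 1" by (simp_all add: s_def)
  define D where "D = (\<lambda>L. \<bar>qf j L * (1 - qf j L) - 12 / 49\<bar>)"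
  have pw: "D L \<le> 6 / real (Suc j) * \<bar>Xf j L\<bar>" if L: "L \<in> set_pmf (Lc j)" for L
  proof -
    have q: "0 \<le> qf j L" "qf j L \<le> 1" using q01[OF L] by auto
    have "qf j L * (1 - qf j L) - 12 / 49 = - ((qf j L - 3/7) * (qf j L - 4/7))" by (simp add: field_simps)
    then have "D L = \<bar>qf j L - 3/7\<bar> * \<bar>qf j L - 4/7\<bar>" by (simp add: D_def abs_mult)
    also have "\<dots> \<le> \<bar>qf j L - 3/7\<bar> * 1" using q by (intro mult_left_mono) auto
    also have "\<bar>qf j L - 3/7\<bar> = 6 / real (Suc j) * \<bar>Xf j L\<bar>" unfolding qX[OF j L] by (simp add: abs_mult)
    finally show ?thesis by simp
  qed
  have ED: "EE j D \<le> 39 / s"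
  proof -
    have "EE j D \<le> EE j (\<lambda>L. 6 / real (Suc j) * \<bar>Xf j L\<bar>)" using pw by (intro EE_mono)
    also have "\<dots> = 6 / real (Suc j) * EE j (\<lambda>L. \<bar>Xf j L\<bar>)" by (simp add: EE_mult_div)
    also have "\<dots> \<le> 6 / real (Suc j) * (13 / 2 * s)" using EE_absX[OF j] by (intro mult_left_mono) (auto simp: s_def)
    also have "\<dots> = 39 / s" using s by (simp add: field_simps power2_eq_square)
    finally show ?thesis .
  qed
  have Qc: "\<bar>Qv j - 12 / 49\<bar> \<le> EE j D"
  proof -
    have "Qv j - 12/49 = EE j (\<lambda>L. qf j L * (1 - qf j L) - 12 / 49)" by (simp add: EE_diff EE_const Qv_def)
    then have "\<bar>Qv j - 12/49\<bar> = norm (EE j (\<lambda>L. qf j L * (1 - qf j L) - 12 / 49))" by simp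
    also have "\<dots> \<le> EE j D" using EE_norm[of j "\<lambda>L. qf j L * (1 - qf j L) - 12/49"]
      unfolding D_def real_norm_def by simp
    finally show ?thesis .
  qed
  have "EE j (\<lambda>L. \<bar>qf j L * (1 - qf j L) - Qv j\<bar>) \<le> EE j (\<lambda>L. D L + \<bar>Qv j - 12/49\<bar>)"
    by (intro EE_mono) (simp add: D_def)
  also have "\<dots> = EE j D + \<bar>Qv j - 12/49\<bar>" by (simp add: EE_add EE_const)
  also have "\<dots> \<le> 78 / s" using ED Qc by simp
  finally show ?thesis by (simp add: s_def)
qed

lemma norm_iexp: "cmod (iexp x) = 1" by (rule norm_exp_i_times)

lemma RR_step_bound:
  fixes t :: real
  assumes j: "5 \<le> j" "j < n"
  defines "tau \<equiv> \<bar>t\<bar> / sqrt (c2 n)"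
  shows "cmod (RR n t (Suc j) - RR n t j) \<le> tau^3 / 6 + 39 * tau^2 / sqrt (real j + 1) + tau^4 / 8"
proof -
  define th where "th = t * wgt n (Suc j) / sqrt (c2 n)"
  have j0: "0 < j" using j by simp
  have thb: "\<bar>th\<bar> \<le> tau"
  proof -
    have w: "0 \<le> wgt n (Suc j)" "wgt n (Suc j) \<le> 1" using wgt_bounds[of "Suc j" n] j by auto
    have "\<bar>th\<bar> = \<bar>t\<bar> * wgt n (Suc j) / sqrt (c2 n)" using w less_imp_le[OF c2_pos[of n]] by (simp add: th_def abs_mult)
    also have "\<dots> \<le> \<bar>t\<bar> * 1 / sqrt (c2 n)" using w c2_pos[of n] by (intro divide_right_mono mult_left_mono) auto
    finally show ?thesis by (simp add: tau_def)
  qed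
  have Q: "0 \<le> Qv j" "Qv j \<le> 1" using Qv_bounds by auto
  have E1: "cmod (complex_of_real (exp (- (t^2 * Sf n (Suc j) / 2)))) \<le> 1"
    using Sf_nonneg[of "Suc j" n] j by simp
  have "cmod (RR n t (Suc j) - RR n t j) \<le>
     cmod (EE j (\<lambda>L. iexp (t * wgt n j / sqrt (c2 n) * Xf j L) *
      (phi (qf j L) th - complex_of_real (exp (- (th^2 * Qv j / 2)))))) * 1"
    unfolding RR_step[OF j0 j(2), of t, folded th_def] norm_mult
    using E1 by (intro mult_left_mono) auto
  also have "\<dots> \<le> EE j (\<lambda>L. cmod (iexp (t * wgt n j / sqrt (c2 n) * Xf j L) *
      (phi (qf j L) th - complex_of_real (exp (- (th^2 * Qv j / 2))))))"
    using EE_norm by simp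
  also have "\<dots> = EE j (\<lambda>L. cmod (phi (qf j L) th - complex_of_real (exp (- (th^2 * Qv j / 2)))))"
    by (intro EE_cong) (simp only: norm_mult norm_iexp mult_1_left)
  also have "\<dots> \<le> EE j (\<lambda>L. \<bar>th\<bar>^3 / 6 + th^2 / 2 * \<bar>qf j L * (1 - qf j L) - Qv j\<bar> + th^4 / 8)"
    by (intro EE_mono phi_exp_bound) (use q01 Q in auto)
  also have "\<dots> = \<bar>th\<bar>^3 / 6 + th^2 / 2 * EE j (\<lambda>L. \<bar>qf j L * (1 - qf j L) - Qv j\<bar>) + th^4 / 8"
    by (simp only: EE_add EE_mult EE_const)
  also have "\<dots> \<le> tau^3 / 6 + tau^2 / 2 * (78 / sqrt (real j + 1)) + tau^4 / 8"
  proof -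
    have t2: "th^2 \<le> tau^2" using power_mono[OF thb abs_ge_zero, of 2] by simp
    have t3: "\<bar>th\<bar>^3 \<le> tau^3" using thb by (intro power_mono) auto
    have t4: "th^4 \<le> tau^4" using power_mono[OF thb abs_ge_zero, of 4] by (simp add: power_even_abs)
    have ee: "0 \<le> EE j (\<lambda>L. \<bar>qf j L * (1 - qf j L) - Qv j\<bar>)"
      using EE_mono[of j "\<lambda>_. 0" "\<lambda>L. \<bar>qf j L * (1 - qf j L) - Qv j\<bar>"] by (simp add: EE_const)
    have "th^2 / 2 * EE j (\<lambda>L. \<bar>qf j L * (1 - qf j L) - Qv j\<bar>) \<le> tau^2 / 2 * (78 / sqrt (real j + 1))"
      using t2 ee absdev[OF j(1)] by (intro mult_mono) auto
    then show ?thesis using t3 t4 by linarith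
  qed
  also have "\<dots> = tau^3 / 6 + 39 * tau^2 / sqrt (real j + 1) + tau^4 / 8" by simp
  finally show ?thesis .
qed

lemma RR_total_bound:
  fixes t :: real
  assumes n: "12 \<le> n"
  defines "tau \<equiv> \<bar>t\<bar> / sqrt (c2 n)"
  shows "cmod (RR n t n - RR n t 5) \<le> real n * tau^3 / 6 + 78 * tau^2 * sqrt (real n) + real n * tau^4 / 8"
proof -
  have "RR n t n - RR n t 5 = (\<Sum>j = 5..<n. RR n t (Suc j) - RR n t j)"
    using n by (simp add: sum_Suc_diff')
  then have "cmod (RR n t n - RR n t 5) \<le> (\<Sum>j = 5..<n. cmod (RR n t (Suc j) - RR n t j))"
    by (simp add: norm_sum)
  also have "\<dots> \<le> (\<Sum>j = 5..<n. tau^3 / 6 + 39 * tau^2 / sqrt (real j + 1) + tau^4 / 8)"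
    by (intro sum_mono) (auto simp: tau_def intro!: RR_step_bound)
  also have "\<dots> = real (n - 5) * (tau^3 / 6) + 39 * tau^2 * (\<Sum>j = 5..<n. 1 / sqrt (real j + 1)) + real (n - 5) * (tau^4 / 8)"
    by (simp add: sum.distrib sum_distrib_left)
  also have "\<dots> \<le> real n * (tau^3 / 6) + 39 * tau^2 * (2 * sqrt (real n)) + real n * (tau^4 / 8)"
  proof -
    have "(\<Sum>j = 5..<n. 1 / sqrt (real j + 1)) \<le> (\<Sum>j<n. 1 / sqrt (real j + 1))"
      by (intro sum_mono2) auto
    also have "\<dots> \<le> 2 * sqrt (real n)" by (rule sum_inv_sqrt)
    finally have s: "(\<Sum>j = 5..<n. 1 / sqrt (real j + 1)) \<le> 2 * sqrt (real n)" .
    have tau0: "0 \<le> tau" using c2_pos[of n] by (simp add: tau_def)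
    show ?thesis
      using s tau0 by (intro add_mono mult_right_mono mult_left_mono) auto
  qed
  also have "\<dots> = real n * tau^3 / 6 + 78 * tau^2 * sqrt (real n) + real n * tau^4 / 8" by simp
  finally show ?thesis .
qed

lemma RR_n: "RR n t n = EE n (\<lambda>L. iexp (t / sqrt (c2 n) * Xf n L))"
  by (simp add: RR_def wgt_n Sf_n)

lemma RR_5: "12 \<le> n \<Longrightarrow> RR n t 5 = complex_of_real (exp (- (t^2 / 2)))"
  by (simp add: RR_def wgt_5 Sf_5 EE_const)


lemma lim1: "(\<lambda>n::nat. real n / sqrt (12/637 * (real n + 1))^3) \<longlonglongrightarrow> 0" by real_asymp
lemma lim2: "(\<lambda>n::nat. sqrt (real n) / (12/637 * (real n + 1))) \<longlonglongrightarrow> 0" by real_asymp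
lemma lim3: "(\<lambda>n::nat. real n / (12/637 * (real n + 1))^2) \<longlonglongrightarrow> 0" by real_asymp

lemma bound_lim:
  fixes t :: real
  shows "(\<lambda>n. real n * (\<bar>t\<bar> / sqrt (c2 n))^3 / 6 + 78 * (\<bar>t\<bar> / sqrt (c2 n))^2 * sqrt (real n)
     + real n * (\<bar>t\<bar> / sqrt (c2 n))^4 / 8) \<longlonglongrightarrow> 0"
proof -
  have eq: "real n * (\<bar>t\<bar> / sqrt (c2 n))^3 / 6 + 78 * (\<bar>t\<bar> / sqrt (c2 n))^2 * sqrt (real n)
     + real n * (\<bar>t\<bar> / sqrt (c2 n))^4 / 8 =
     \<bar>t\<bar>^3 / 6 * (real n / sqrt (12/637 * (real n + 1))^3) + 78 * t^2 * (sqrt (real n) / (12/637 * (real n + 1)))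
     + t^4 / 8 * (real n / (12/637 * (real n + 1))^2)" for n
  proof -
    have g: "real n * (\<bar>t\<bar> / sqrt c)^3 / 6 + 78 * (\<bar>t\<bar> / sqrt c)^2 * sqrt (real n)
     + real n * (\<bar>t\<bar> / sqrt c)^4 / 8 =
     \<bar>t\<bar>^3 / 6 * (real n / sqrt c^3) + 78 * t^2 * (sqrt (real n) / c) + t^4 / 8 * (real n / c^2)"
      if c: "0 < c" for c :: real
    proof -
      have s2: "sqrt c^2 = c" using c by simp
      have s4: "sqrt c^4 = c^2" using s2 by (metis power_mult numeral_Bit0 numeral_One mult_2 power2_eq_square numeral_2_eq_2)
      have a2: "\<bar>t\<bar>^2 = t^2" by simp
      have a4: "\<bar>t\<bar>^4 = t^4" by (simp add: power_abs)
      show ?thesis unfolding power_divide s2 s4 a2 a4 using c by (simp add: field_simps)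
    qed
    show ?thesis using g[OF c2_pos[of n]] by (simp only: c2_def)
  qed
  have "(\<lambda>n. \<bar>t\<bar>^3 / 6 * (real n / sqrt (12/637 * (real n + 1))^3) + 78 * t^2 * (sqrt (real n) / (12/637 * (real n + 1)))
     + t^4 / 8 * (real n / (12/637 * (real n + 1))^2)) \<longlonglongrightarrow> 0"
    by (rule tendsto_add_zero[OF tendsto_add_zero[OF tendsto_mult_right_zero[OF lim1]
          tendsto_mult_right_zero[OF lim2]] tendsto_mult_right_zero[OF lim3]])
  then show ?thesis by (simp only: eq)
qed

lemma char_L:
  assumes n: "12 \<le> n"
  shows "char (distr (measure_pmf (L_dist n)) borel
                  (\<lambda>x. (x - measure_pmf.expectation (L_dist n) (\<lambda>y. y))
                       / sqrt (measure_pmf.variance (L_dist n) (\<lambda>y. y)))) t = RR n t n"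
proof -
  have p: "measure_pmf.expectation (L_dist n) (\<lambda>x. x) = 3 / 7 * (real n + 1) \<and>
            measure_pmf.variance (L_dist n) (\<lambda>x. x) = 12 / 637 * (real n + 1)" using part1[of n] n by simp
  define a where "a = 3 / 7 * (real n + 1)"
  define b where "b = 12 / 637 * (real n + 1)"
  have hE: "(\<lambda>x. (x - measure_pmf.expectation (L_dist n) (\<lambda>y. y))
                       / sqrt (measure_pmf.variance (L_dist n) (\<lambda>y. y))) = (\<lambda>x. (x - a) / sqrt b)"
    apply (subst p[THEN conjunct2])
    apply (subst p[THEN conjunct1])
    apply (simp only: a_def b_def)
    done
  have "char (distr (measure_pmf (L_dist n)) borel (\<lambda>x. (x - a) / sqrt b)) t =
        (\<integral>x. iexp (t * ((x - a) / sqrt b)) \<partial>measure_pmf (L_dist n))"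
    unfolding char_def by (subst integral_distr) auto
  also have "\<dots> = (\<integral>L. iexp (t * ((real L - a) / sqrt b)) \<partial>measure_pmf (Lc n))"
    unfolding L_dist_Lc by (rule integral_map_pmf)
  also have "\<dots> = EE n (\<lambda>L. iexp (t * ((real L - a) / sqrt b)))"
    by (rule integral_Lc)
  also have "\<dots> = RR n t n"
    unfolding RR_n
  proof (intro EE_cong)
    fix L
    have "t * ((real L - a) / sqrt b) = t / sqrt (c2 n) * Xf n L"
      by (simp add: a_def b_def Xf_def c2_def)
    then show "iexp (t * ((real L - a) / sqrt b)) = iexp (t / sqrt (c2 n) * Xf n L)" by simp
  qed
  finally show ?thesis unfolding hE .
qed

lemma part2: "weak_conv_m
           (\<lambda>n. distr (measure_pmf (L_dist n)) borel
                  (\<lambda>x. (x - measure_pmf.expectation (L_dist n) (\<lambda>y. y))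
                       / sqrt (measure_pmf.variance (L_dist n) (\<lambda>y. y))))
           std_normal_distribution"
proof (rule levy_continuity)
  fix n
  show "real_distribution (distr (measure_pmf (L_dist n)) borel
                  (\<lambda>x. (x - measure_pmf.expectation (L_dist n) (\<lambda>y. y))
                       / sqrt (measure_pmf.variance (L_dist n) (\<lambda>y. y))))"
    by (intro prob_space.real_distribution_distr prob_space_measure_pmf) simp
next
  show "real_distribution std_normal_distribution" by (rule real_dist_normal_dist)
next
  fix t :: real
  let ?c = "\<lambda>n. char (distr (measure_pmf (L_dist n)) borel
                  (\<lambda>x. (x - measure_pmf.expectation (L_dist n) (\<lambda>y. y))
                       / sqrt (measure_pmf.variance (L_dist n) (\<lambda>y. y)))) t"
  have ev: "eventually (\<lambda>n. norm (?c n - complex_of_real (exp (- (t^2 / 2)))) \<le>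
     real n * (\<bar>t\<bar> / sqrt (c2 n))^3 / 6 + 78 * (\<bar>t\<bar> / sqrt (c2 n))^2 * sqrt (real n)
     + real n * (\<bar>t\<bar> / sqrt (c2 n))^4 / 8) sequentially"
  proof (rule eventually_sequentiallyI[of 12])
    fix n :: nat assume n: "12 \<le> n"
    show "norm (?c n - complex_of_real (exp (- (t^2 / 2)))) \<le>
     real n * (\<bar>t\<bar> / sqrt (c2 n))^3 / 6 + 78 * (\<bar>t\<bar> / sqrt (c2 n))^2 * sqrt (real n)
     + real n * (\<bar>t\<bar> / sqrt (c2 n))^4 / 8"
      using RR_total_bound[OF n, of t] unfolding char_L[OF n] RR_5[OF n] .
  qed
  have "(\<lambda>n. ?c n - complex_of_real (exp (- (t^2 / 2)))) \<longlonglongrightarrow> 0"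
    by (rule Lim_null_comparison[OF ev bound_lim])
  then have "?c \<longlonglongrightarrow> complex_of_real (exp (- (t^2 / 2)))" by (simp add: LIM_zero_iff)
  then show "?c \<longlonglongrightarrow> char std_normal_distribution t"
    by (simp add: char_std_normal_distribution)
qed


theorem theorem5p1:
  shows "(\<forall>n::nat. n > 11 \<longrightarrow>
            measure_pmf.expectation (L_dist n) (\<lambda>x. x) = 3 / 7 * (real n + 1) \<and>
            measure_pmf.variance (L_dist n) (\<lambda>x. x) = 12 / 637 * (real n + 1))
       \<and> weak_conv_m
           (\<lambda>n. distr (measure_pmf (L_dist n)) borel
                  (\<lambda>x. (x - measure_pmf.expectation (L_dist n) (\<lambda>y. y))
                       / sqrt (measure_pmf.variance (L_dist n) (\<lambda>y. y))))
           std_normal_distribution"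
  using part1 part2 by blast

end
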